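(* Let $\sigma,\zeta$ be the Weierstrass sigma and zeta functions for a lattice $2\omega_1\mathbb Z+2\omega_2\mathbb Z$ with $\mathrm{Im}(\omega_2/\omega_1)>0$, and $\Phi(x,\alpha)=\frac{\sigma(x-\alpha)}{\sigma(x)\sigma(\alpha)}e^{x\zeta(\alpha)}$. For every $n\ge1$, as an identity of meromorphic functions of $x,\alpha_1,\dots,\alpha_n$, $$\frac{\sigma\big(x-\sum_{j=1}^n\alpha_j\big)\prod_{1\le i<j\le n}\sigma(\alpha_i-\alpha_j)}{\sigma(x)\prod_{i=1}^n\sigma(\alpha_i)^n}\,e^{x\sum_{j=1}^n\zeta(\alpha_j)}=\det\Big(\frac{\partial^{i-1}}{\partial x^{i-1}}\Phi(x,\alpha_j)\Big)_{1\le i,j\le n}.$$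
   Context: $\sigma(u)$ is the Weierstrass sigma function of the lattice with periods $2\omega_1,2\omega_2$ and $\zeta(u)=\sigma'(u)/\sigma(u)$. *)

theory Defs
  imports "HOL-Complex_Analysis.Complex_Analysis" "Jordan_Normal_Form.Determinant"
begin

definition lattice :: "complex \<Rightarrow> complex \<Rightarrow> complex set" where
  "lattice w1 w2 = {2 * of_int m * w1 + 2 * of_int k * w2 | m k. True}"

definition wsigma :: "complex \<Rightarrow> complex \<Rightarrow> complex \<Rightarrow> complex" where
  "wsigma w1 w2 u = lim (\<lambda>N::nat. u * (\<Prod>p\<in>({-int N..int N} \<times> {-int N..int N}) - {(0,0)}.
      (let w = 2 * of_int (fst p) * w1 + 2 * of_int (snd p) * w2
       in (1 - u / w) * exp (u / w + u^2 / (2 * w^2)))))"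

definition wzeta :: "complex \<Rightarrow> complex \<Rightarrow> complex \<Rightarrow> complex" where
  "wzeta w1 w2 u = deriv (wsigma w1 w2) u / wsigma w1 w2 u"

definition Phi :: "complex \<Rightarrow> complex \<Rightarrow> complex \<Rightarrow> complex \<Rightarrow> complex" where
  "Phi w1 w2 x a = wsigma w1 w2 (x - a) / (wsigma w1 w2 x * wsigma w1 w2 a) * exp (x * wzeta w1 w2 a)"

end

theory Submission
  imports Defs
begin

definition wl :: "complex \<Rightarrow> complex \<Rightarrow> int \<times> int \<Rightarrow> complex" where
  "wl w1 w2 p = 2 * of_int (fst p) * w1 + 2 * of_int (snd p) * w2"

definition sqr :: "nat \<Rightarrow> (int \<times> int) set" where
  "sqr N = {-int N..int N} \<times> {-int N..int N}"

definition fac :: "complex \<Rightarrow> complex \<Rightarrow> complex \<Rightarrow> int \<times> int \<Rightarrow> complex" where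
  "fac w1 w2 u p = (let w = wl w1 w2 p in (1 - u / w) * exp (u / w + u^2 / (2 * w^2)))"

definition PN :: "complex \<Rightarrow> complex \<Rightarrow> nat \<Rightarrow> complex \<Rightarrow> complex" where
  "PN w1 w2 N u = u * (\<Prod>p\<in>sqr N - {(0,0)}. fac w1 w2 u p)"

lemma wsigma_PN: "wsigma w1 w2 u = lim (\<lambda>N. PN w1 w2 N u)"
  by (simp add: wsigma_def PN_def fac_def wl_def sqr_def)

lemma lattice_wl: "lattice w1 w2 = range (wl w1 w2)"
  unfolding lattice_def wl_def image_def by force

lemma wl_add: "wl w1 w2 (p + q) = wl w1 w2 p + wl w1 w2 q"
  by (cases p; cases q) (simp add: wl_def algebra_simps)
lemma wl_minus: "wl w1 w2 (- p) = - wl w1 w2 p"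
  by (cases p) (simp add: wl_def algebra_simps)
lemma wl_diff: "wl w1 w2 (p - q) = wl w1 w2 p - wl w1 w2 q"
  by (cases p; cases q) (simp add: wl_def algebra_simps)
lemma wl_0 [simp]: "wl w1 w2 (0,0) = 0"
  by (simp add: wl_def)

locale lat =
  fixes w1 w2 :: complex
  assumes tau: "Im (w2 / w1) > 0"
begin

lemma w1_nz: "w1 \<noteq> 0"
  using tau by auto

lemma lower_aux:
  fixes t s :: real and m k :: real and z :: complex
  assumes "t > 0" "s \<ge> t" "norm z \<ge> t * \<bar>k\<bar>" "norm z \<ge> \<bar>m\<bar> - s * \<bar>k\<bar>"
  shows "norm z \<ge> t / (1 + s + t) * max \<bar>m\<bar> \<bar>k\<bar>"
proof -
  have "s * norm z \<ge> s * (t * \<bar>k\<bar>)" using assms by (intro mult_left_mono) auto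
  moreover have "t * norm z \<ge> t * (\<bar>m\<bar> - s * \<bar>k\<bar>)" using assms by (intro mult_left_mono) auto
  ultimately have 1: "(s + t) * norm z \<ge> t * \<bar>m\<bar>" by (simp add: algebra_simps)
  have "t / (1 + s + t) * \<bar>m\<bar> \<le> norm z"
  proof -
    have "t / (1 + s + t) * \<bar>m\<bar> \<le> t / (s + t) * \<bar>m\<bar>"
      using assms by (intro mult_right_mono divide_left_mono) auto
    also have "\<dots> \<le> norm z" using 1 assms by (simp add: field_simps)
    finally show ?thesis .
  qed
  moreover have "t / (1 + s + t) * \<bar>k\<bar> \<le> norm z"
  proof -
    have "t / (1 + s + t) * \<bar>k\<bar> \<le> t * \<bar>k\<bar>"
      using assms by (intro mult_right_mono) (auto simp: field_simps)
    thus ?thesis using assms by linarith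
  qed
  ultimately show ?thesis by (simp add: max_def)
qed

lemma lower: obtains c where "c > 0" "\<And>p. norm (wl w1 w2 p) \<ge> c * max \<bar>real_of_int (fst p)\<bar> \<bar>real_of_int (snd p)\<bar>"
proof -
  define \<tau> where "\<tau> = w2 / w1"
  define t where "t = Im \<tau>"
  define s where "s = norm \<tau>"
  have t: "t > 0" using tau by (simp add: t_def \<tau>_def)
  have st: "s \<ge> t" unfolding s_def t_def by (meson abs_Im_le_cmod abs_ge_self order.trans)
  define c0 where "c0 = t / (1 + s + t)"
  have c0: "c0 > 0" using t st by (simp add: c0_def)
  have main: "norm (of_int m + of_int k * \<tau>) \<ge> c0 * max \<bar>real_of_int m\<bar> \<bar>real_of_int k\<bar>" for m k
  proof -
    let ?z = "of_int m + of_int k * \<tau> :: complex"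
    have "t * \<bar>real_of_int k\<bar> = \<bar>Im ?z\<bar>" using t by (simp add: t_def abs_mult)
    also have "\<dots> \<le> norm ?z" by (rule abs_Im_le_cmod)
    finally have 1: "norm ?z \<ge> t * \<bar>real_of_int k\<bar>" .
    have "norm (of_int m :: complex) \<le> norm ?z + norm (of_int k * \<tau>)"
      by (metis add_diff_cancel norm_triangle_ineq4)
    hence 2: "norm ?z \<ge> \<bar>real_of_int m\<bar> - s * \<bar>real_of_int k\<bar>"
      by (simp add: s_def norm_mult mult.commute)
    show ?thesis unfolding c0_def by (rule lower_aux[OF t st 1 2])
  qed
  show ?thesis
  proof (rule that[of "2 * norm w1 * c0"])
    show "2 * norm w1 * c0 > 0" using c0 w1_nz by auto
    fix p :: "int \<times> int"
    obtain m k where p: "p = (m, k)" by force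
    have "wl w1 w2 p = 2 * w1 * (of_int m + of_int k * \<tau>)"
      using w1_nz by (simp add: p wl_def \<tau>_def field_simps)
    hence "norm (wl w1 w2 p) = 2 * norm w1 * norm (of_int m + of_int k * \<tau>)"
      by (simp add: norm_mult)
    also have "\<dots> \<ge> 2 * norm w1 * (c0 * max \<bar>real_of_int m\<bar> \<bar>real_of_int k\<bar>)"
      by (intro mult_left_mono main) auto
    finally show "norm (wl w1 w2 p) \<ge> 2 * norm w1 * c0 * max \<bar>real_of_int (fst p)\<bar> \<bar>real_of_int (snd p)\<bar>"
      by (simp add: p mult.assoc)
  qed
qed

definition c where "c = (SOME c. c > 0 \<and> (\<forall>p. norm (wl w1 w2 p) \<ge> c * max \<bar>real_of_int (fst p)\<bar> \<bar>real_of_int (snd p)\<bar>))"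

lemma c_pos: "c > 0" and c_le: "norm (wl w1 w2 p) \<ge> c * max \<bar>real_of_int (fst p)\<bar> \<bar>real_of_int (snd p)\<bar>"
proof -
  obtain c0 where "c0 > 0" "\<And>p. norm (wl w1 w2 p) \<ge> c0 * max \<bar>real_of_int (fst p)\<bar> \<bar>real_of_int (snd p)\<bar>"
    using lower by blast
  hence "\<exists>c. c > 0 \<and> (\<forall>p. norm (wl w1 w2 p) \<ge> c * max \<bar>real_of_int (fst p)\<bar> \<bar>real_of_int (snd p)\<bar>)" by blast
  from someI_ex[OF this] show "c > 0" "norm (wl w1 w2 p) \<ge> c * max \<bar>real_of_int (fst p)\<bar> \<bar>real_of_int (snd p)\<bar>"
    unfolding c_def by blast+
qed

lemma wl_eq_0_iff: "wl w1 w2 p = 0 \<longleftrightarrow> p = (0,0)"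
proof
  assume "wl w1 w2 p = 0"
  with c_le[of p] c_pos have "max \<bar>real_of_int (fst p)\<bar> \<bar>real_of_int (snd p)\<bar> \<le> 0"
    by (simp add: mult_le_0_iff)
  thus "p = (0,0)" by (cases p) auto
qed auto

lemma wl_inj: "wl w1 w2 p = wl w1 w2 q \<longleftrightarrow> p = q"
proof
  assume "wl w1 w2 p = wl w1 w2 q"
  hence "wl w1 w2 (p - q) = 0" by (simp add: wl_diff)
  hence "p - q = (0,0)" by (simp add: wl_eq_0_iff)
  thus "p = q" by (cases p; cases q) auto
qed auto

end

lemma sqr_0 [simp]: "sqr 0 = {(0,0)}"
  by (auto simp: sqr_def)
lemma sqr_mono: "k \<le> N \<Longrightarrow> sqr k \<subseteq> sqr N"
  by (auto simp: sqr_def)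
lemma finite_sqr [simp]: "finite (sqr N)"
  by (simp add: sqr_def)
lemma card_sqr: "card (sqr N) = (2 * N + 1)^2"
  by (simp add: sqr_def card_cartesian_product power2_eq_square nat_add_distrib nat_mult_distrib)
lemma mem_sqr: "(m, k) \<in> sqr N \<longleftrightarrow> \<bar>m\<bar> \<le> int N \<and> \<bar>k\<bar> \<le> int N"
  by (auto simp: sqr_def)

lemma card_shell: "card (sqr (Suc k) - sqr k) = 8 * (k + 1)"
proof -
  have "card (sqr (Suc k) - sqr k) = card (sqr (Suc k)) - card (sqr k)"
    using sqr_mono[of k "Suc k"] by (intro card_Diff_subset) auto
  also have "\<dots> = 8 * (k + 1)" by (simp add: card_sqr power2_eq_square algebra_simps)
  finally show ?thesis .
qed

lemma shell_max: assumes "p \<in> sqr (Suc k) - sqr k"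
  shows "real (Suc k) \<le> max \<bar>real_of_int (fst p)\<bar> \<bar>real_of_int (snd p)\<bar>"
proof -
  obtain m j where p: "p = (m, j)" by force
  from assms have "\<not> (\<bar>m\<bar> \<le> int k \<and> \<bar>j\<bar> \<le> int k)" by (simp add: p mem_sqr)
  hence "\<bar>m\<bar> \<ge> int k + 1 \<or> \<bar>j\<bar> \<ge> int k + 1" by linarith
  hence "\<bar>real_of_int m\<bar> \<ge> real k + 1 \<or> \<bar>real_of_int j\<bar> \<ge> real k + 1"
  proof (elim disjE)
    assume h: "int k + 1 \<le> \<bar>m\<bar>"
    have "real_of_int (int k + 1) \<le> real_of_int \<bar>m\<bar>" using h by (simp only: of_int_le_iff)
    thus ?thesis by simp
  next
    assume h: "int k + 1 \<le> \<bar>j\<bar>"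
    have "real_of_int (int k + 1) \<le> real_of_int \<bar>j\<bar>" using h by (simp only: of_int_le_iff)
    thus ?thesis by simp
  qed
  thus ?thesis by (auto simp: p max_def)
qed

lemma prod_sqr_shells:
  "(\<Prod>p\<in>sqr N - {(0,0)}. f p) = (\<Prod>k<N. \<Prod>p\<in>sqr (Suc k) - sqr k. f p)"
proof (induction N)
  case 0 thus ?case by simp
next
  case (Suc N)
  have "sqr (Suc N) - {(0,0)} = (sqr N - {(0,0)}) \<union> (sqr (Suc N) - sqr N)"
    using sqr_mono[of N "Suc N"] sqr_mono[of 0 N] by auto
  hence "(\<Prod>p\<in>sqr (Suc N) - {(0,0)}. f p) = (\<Prod>p\<in>sqr N - {(0,0)}. f p) * (\<Prod>p\<in>sqr (Suc N) - sqr N. f p)"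
    by (simp add: prod.union_disjoint Diff_Int_distrib2 inf_commute) (subst prod.union_disjoint; auto)
  thus ?case using Suc by simp
qed

lemma norm_prod_minus1_le':
  fixes f :: "'b \<Rightarrow> complex"
  shows "norm ((\<Prod>x\<in>A. 1 + f x) - 1) \<le> (\<Prod>x\<in>A. 1 + norm (f x)) - 1"
proof (induction A rule: infinite_finite_induct)
  case (insert x A)
  define P where "P = (\<Prod>x\<in>A. 1 + f x)"
  define P' where "P' = (\<Prod>x\<in>A. 1 + norm (f x))"
  have "norm P \<le> (\<Prod>x\<in>A. norm (1 + f x))" unfolding P_def by (rule norm_prod_le)
  also have "\<dots> \<le> P'" unfolding P'_def
    by (intro prod_mono) (auto intro: norm_triangle_le)
  finally have nP: "norm P \<le> P'" .
  have "(\<Prod>x\<in>insert x A. 1 + f x) - 1 = (P - 1) + f x * P" using insert by (simp add: P_def algebra_simps)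
  hence "norm ((\<Prod>x\<in>insert x A. 1 + f x) - 1) \<le> norm (P - 1) + norm (f x) * norm P"
    by (metis norm_mult norm_triangle_ineq)
  also have "\<dots> \<le> (P' - 1) + norm (f x) * P'"
    using insert nP by (intro add_mono mult_left_mono) (auto simp: P_def P'_def)
  also have "\<dots> = (\<Prod>x\<in>insert x A. 1 + norm (f x)) - 1" using insert by (simp add: P'_def algebra_simps)
  finally show ?case .
qed auto

lemma fac_weierstrass: "fac w1 w2 u p = weierstrass_factor 2 (u / wl w1 w2 p)"
  by (simp add: fac_def weierstrass_factor_def Let_def power_divide numeral_2_eq_2 field_simps)

lemma fac_eq_0_iff: "wl w1 w2 p \<noteq> 0 \<Longrightarrow> fac w1 w2 u p = 0 \<longleftrightarrow> u = wl w1 w2 p"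
  by (simp add: fac_weierstrass)

context lat
begin

abbreviation sig where "sig \<equiv> wsigma w1 w2"

definition Q :: "nat \<Rightarrow> complex \<Rightarrow> complex" where
  "Q k u = (\<Prod>p\<in>sqr (Suc k) - sqr k. fac w1 w2 u p)"

lemma PN_Q: "PN w1 w2 N u = u * (\<Prod>k<N. Q k u)"
  by (simp add: PN_def Q_def prod_sqr_shells)

lemma shell_norm: assumes "p \<in> sqr (Suc k) - sqr k" shows "norm (wl w1 w2 p) \<ge> c * real (Suc k)"
  using c_le[of p] shell_max[OF assms] c_pos by (meson mult_left_mono less_imp_le order.trans)

lemma shell_nz: assumes "p \<in> sqr (Suc k) - sqr k" shows "wl w1 w2 p \<noteq> 0"
  using shell_norm[OF assms] c_pos by (metis mult_pos_pos norm_zero not_le of_nat_0_less_iff zero_less_Suc)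

lemma shell_nz': "p \<in> sqr (Suc k) \<Longrightarrow> p \<notin> sqr k \<Longrightarrow> wl w1 w2 p = 0 \<Longrightarrow> False"
  using shell_nz[of p k] by blast

lemma fac_bound:
  assumes p: "p \<in> sqr (Suc k) - sqr k" and u: "norm u \<le> R" and k: "c * real (Suc k) \<ge> 2 * R"
  shows "norm (fac w1 w2 u p - 1) \<le> 3 * (R / (c * real (Suc k)))^3"
proof -
  have pos: "c * real (Suc k) > 0" using c_pos by simp
  have R: "R \<ge> 0" using u norm_ge_zero order.trans by blast
  have "norm (u / wl w1 w2 p) \<le> R / (c * real (Suc k))"
    unfolding norm_divide using shell_norm[OF p] u pos R
    by (intro frac_le) auto
  also have "\<dots> \<le> 1/2" using k pos by (simp add: field_simps)
  finally have h: "norm (u / wl w1 w2 p) \<le> 1/2" .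
  have "norm (fac w1 w2 u p - 1) \<le> 3 * norm (u / wl w1 w2 p) ^ Suc 2"
    unfolding fac_weierstrass by (rule weierstrass_factor_bound[OF h])
  also have "\<dots> \<le> 3 * (R / (c * real (Suc k)))^Suc 2"
  proof -
    have "norm (u / wl w1 w2 p) ^ Suc 2 \<le> (R / (c * real (Suc k)))^Suc 2"
      by (rule power_mono) (use \<open>norm (u / wl w1 w2 p) \<le> R / (c * real (Suc k))\<close> in auto)
    thus ?thesis by simp
  qed
  finally show ?thesis by (simp add: numeral_3_eq_3)
qed

definition MQ :: "real \<Rightarrow> nat \<Rightarrow> real" where
  "MQ R k = 48 * R^3 / (c^3 * real (Suc k)^2)"

lemma summable_MQ: "summable (MQ R)"
proof -
  have "summable (\<lambda>k. 1 / real (Suc k)^2)"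
    using summable_ignore_initial_segment[OF inverse_power_summable[of 2], of 1]
    by (simp add: field_simps)
  from summable_mult[OF this, of "48 * R^3 / c^3"] show ?thesis
    unfolding MQ_def by (simp add: divide_simps)
qed

lemma Q_bound:
  assumes u: "norm u \<le> R" and k: "c * real (Suc k) \<ge> 2 * R" and k2: "48 * R^3 \<le> c^3 * real (Suc k)^2"
  shows "norm (Q k u - 1) \<le> MQ R k"
proof -
  define A where "A = sqr (Suc k) - sqr k"
  define x where "x = 24 * R^3 / (c^3 * real (Suc k)^2)"
  have pos: "c * real (Suc k) > 0" using c_pos by simp
  have R: "R \<ge> 0" using u norm_ge_zero order.trans by blast
  have "norm (Q k u - 1) = norm ((\<Prod>p\<in>A. 1 + (fac w1 w2 u p - 1)) - 1)"
    by (simp add: Q_def A_def)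
  also have "\<dots> \<le> (\<Prod>p\<in>A. 1 + norm (fac w1 w2 u p - 1)) - 1"
    by (rule norm_prod_minus1_le')
  also have "(\<Prod>p\<in>A. 1 + norm (fac w1 w2 u p - 1)) \<le> (\<Prod>p\<in>A. exp (norm (fac w1 w2 u p - 1)))"
    by (intro prod_mono) auto
  also have "\<dots> = exp (\<Sum>p\<in>A. norm (fac w1 w2 u p - 1))"
    by (simp add: exp_sum A_def)
  also have "(\<Sum>p\<in>A. norm (fac w1 w2 u p - 1)) \<le> (\<Sum>p\<in>A. 3 * (R / (c * real (Suc k)))^3)"
    using fac_bound[OF _ u k] by (intro sum_mono) (auto simp: A_def)
  also have "\<dots> = real (card A) * (3 * (R / (c * real (Suc k)))^3)" by simp
  also have "\<dots> = x"
  proof -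
    define s where "s = real (Suc k)"
    have s: "s > 0" by (simp add: s_def)
    have "real (card A) = 8 * s" by (simp add: A_def card_shell s_def)
    moreover have "8 * s * (3 * (R / (c * s))^3) = 24 * R^3 / (c^3 * s^2)"
      using s c_pos by (simp add: power_divide power_mult_distrib field_simps power3_eq_cube power2_eq_square)
    ultimately show ?thesis by (simp add: x_def s_def)
  qed
  finally have 1: "norm (Q k u - 1) \<le> exp x - 1" by simp
  have x0: "x \<ge> 0" using R c_pos by (simp add: x_def)
  have dpos: "c^3 * real (Suc k)^2 > 0" using c_pos by simp
  have x1: "x \<le> 1/2" using k2 unfolding x_def using dpos by (simp add: divide_le_eq)
  have "exp x \<le> 1 + 2 * x"
    using exp_bound_lemma[of x] x0 x1 by simp
  with 1 have "norm (Q k u - 1) \<le> 2 * x" by linarith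
  also have "2 * x = MQ R k" by (simp add: x_def MQ_def)
  finally show ?thesis .
qed

lemma Q_bound_ev: "eventually (\<lambda>k. \<forall>u\<in>cball 0 R. norm (norm (Q k u - 1)) \<le> MQ R k) sequentially"
proof -
  have "eventually (\<lambda>k. c * real (Suc k) \<ge> 2 * R) sequentially"
  proof -
    have "filterlim (\<lambda>k. c * real (Suc k)) at_top sequentially"
      using c_pos by (intro filterlim_tendsto_pos_mult_at_top[OF tendsto_const] filterlim_compose[OF filterlim_real_sequentially filterlim_Suc]) auto
    thus ?thesis by (simp add: filterlim_at_top)
  qed
  moreover have "eventually (\<lambda>k. 48 * R^3 \<le> c^3 * real (Suc k)^2) sequentially"
  proof -
    have "filterlim (\<lambda>k. c^3 * real (Suc k)^2) at_top sequentially"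
      using c_pos by (intro filterlim_tendsto_pos_mult_at_top[OF tendsto_const] filterlim_pow_at_top filterlim_compose[OF filterlim_real_sequentially filterlim_Suc]) auto
    thus ?thesis by (simp add: filterlim_at_top)
  qed
  ultimately show ?thesis
    by eventually_elim (auto intro: Q_bound)
qed

lemma Q_cont: "continuous_on A (Q k)"
  unfolding Q_def fac_def Let_def by (intro continuous_intros ballI) (drule shell_nz, simp)+

lemma Q_holo: "Q k holomorphic_on A"
  unfolding Q_def fac_def Let_def by (intro holomorphic_intros ballI) (drule shell_nz, simp)+

lemma prodQ_uconv: "uniformly_convergent_on (cball 0 R) (\<lambda>N u. \<Prod>k<N. Q k u)"
proof (rule uniformly_convergent_on_prod')
  show "uniformly_convergent_on (cball 0 R) (\<lambda>N u. \<Sum>k<N. norm (Q k u - 1))"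
    by (rule uniformly_convergentI, rule Weierstrass_m_test_ev[OF Q_bound_ev summable_MQ])
qed (auto intro: Q_cont)

end

context lat
begin

lemma PN_fun: "PN w1 w2 N = (\<lambda>u. u * (\<Prod>k<N. Q k u))"
  by (rule ext) (simp add: PN_Q)

lemma PN_holo: "PN w1 w2 N holomorphic_on A"
  unfolding PN_fun by (intro holomorphic_intros Q_holo)

lemma sig_ulim: assumes "R > 0" shows "uniform_limit (cball 0 R) (\<lambda>N. PN w1 w2 N) sig sequentially"
proof -
  obtain g where g: "uniform_limit (cball 0 R) (\<lambda>N u. \<Prod>k<N. Q k u) g sequentially"
    using prodQ_uconv[of R] by (auto simp: uniformly_convergent_on_def)
  have lim: "(\<lambda>N. PN w1 w2 N u) \<longlonglongrightarrow> u * g u" if "u \<in> cball 0 R" for u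
    unfolding PN_Q by (intro tendsto_mult tendsto_const tendsto_uniform_limitI[OF g that])
  have sg: "sig u = u * g u" if "u \<in> cball 0 R" for u
    using lim[OF that] unfolding wsigma_PN by (rule limI)
  show ?thesis
  proof (rule uniform_limitI)
    fix e :: real assume e: "e > 0"
    have "e / (R + 1) > 0" using e assms by simp
    from uniform_limitD[OF g this]
    show "\<forall>\<^sub>F N in sequentially. \<forall>u\<in>cball (0::complex) R. dist (PN w1 w2 N u) (sig u) < e"
    proof eventually_elim
      case (elim N)
      show ?case
      proof
        fix u :: complex assume u: "u \<in> cball 0 R"
        have "dist (PN w1 w2 N u) (sig u) = norm u * dist (\<Prod>k<N. Q k u) (g u)"
          by (simp add: PN_Q sg[OF u] dist_norm norm_mult[symmetric] right_diff_distrib)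
        also have "\<dots> \<le> R * dist (\<Prod>k<N. Q k u) (g u)" using u by (intro mult_right_mono) auto
        also have "\<dots> \<le> R * (e / (R+1))" using elim u assms by (intro mult_left_mono) (auto intro: less_imp_le)
        also have "\<dots> < e" using e assms by (simp add: field_simps)
        finally show "dist (PN w1 w2 N u) (sig u) < e" .
      qed
    qed
  qed
qed

lemma sig_holo_UNIV: "sig holomorphic_on UNIV"
proof (rule holomorphic_uniform_sequence[where f = "\<lambda>N. PN w1 w2 N"])
  fix x :: complex
  have "uniform_limit (cball x 1) (\<lambda>N. PN w1 w2 N) sig sequentially"
    by (rule uniform_limit_on_subset[OF sig_ulim[of "norm x + 1"]])
       (auto simp: cball_subset_cball_iff add_nonneg_pos)
  thus "\<exists>d. 0 < d \<and> cball x d \<subseteq> UNIV \<and> uniform_limit (cball x d) (\<lambda>N. PN w1 w2 N) sig sequentially"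
    by (intro exI[of _ 1]) auto
qed (auto intro: PN_holo)

lemma sig_holo [holomorphic_intros]: "sig holomorphic_on A"
  using sig_holo_UNIV by (rule holomorphic_on_subset) auto

lemma sig_analytic [analytic_intros]: "sig analytic_on A"
  using sig_holo_UNIV analytic_on_holomorphic by blast

lemma sig_cont [continuous_intros]: "continuous_on A sig"
  by (intro holomorphic_on_imp_continuous_on sig_holo)

lemma sig_isCont [continuous_intros]: "isCont sig z"
  by (rule analytic_at_imp_isCont) (rule sig_analytic)

lemma sig_deriv [derivative_intros]: "(sig has_field_derivative deriv sig z) (at z within A)"
  using sig_holo_UNIV by (meson UNIV_I holomorphic_derivI open_UNIV has_field_derivative_at_within)

lemma hderiv_lim: "(\<lambda>N. (deriv ^^ m) (PN w1 w2 N) z) \<longlonglongrightarrow> (deriv ^^ m) sig z"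
proof (rule higher_deriv_complex_uniform_limit)
  show "uniform_limit (ball 0 (norm z + 1)) (\<lambda>N. PN w1 w2 N) sig sequentially"
    by (rule uniform_limit_on_subset[OF sig_ulim[of "norm z + 1"]]) (auto simp: add_nonneg_pos)
  show "\<forall>\<^sub>F N in sequentially. PN w1 w2 N holomorphic_on ball 0 (cmod z + 1)"
    by (intro always_eventually allI PN_holo)
qed auto

lemma PN_lim: "(\<lambda>N. PN w1 w2 N z) \<longlonglongrightarrow> sig z"
  using hderiv_lim[of 0 z] by simp

lemma Q_eq_0_iff: "Q k u = 0 \<longleftrightarrow> (\<exists>p\<in>sqr (Suc k) - sqr k. u = wl w1 w2 p)"
  unfolding Q_def using shell_nz by (auto simp: fac_eq_0_iff)

lemma Q_convergent: "convergent_prod (\<lambda>k. Q k u)"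
proof -
  have "summable (\<lambda>k. norm (Q k u - 1))"
  proof (rule summable_comparison_test_ev[OF _ summable_MQ[of "norm u"]])
    show "\<forall>\<^sub>F k in sequentially. norm (norm (Q k u - 1)) \<le> MQ (norm u) k"
      using Q_bound_ev[of "norm u"] by eventually_elim auto
  qed
  thus ?thesis
    using abs_convergent_prod_conv_summable abs_convergent_prod_imp_convergent_prod by blast
qed

lemma sig_eq: "sig u = u * (\<Prod>k. Q k u)"
proof -
  have "(\<lambda>n. \<Prod>k\<le>n. Q k u) \<longlonglongrightarrow> (\<Prod>k. Q k u)"
    by (rule convergent_prod_LIMSEQ[OF Q_convergent])
  hence "(\<lambda>n. \<Prod>k<Suc n. Q k u) \<longlonglongrightarrow> (\<Prod>k. Q k u)"
    by (simp add: lessThan_Suc_atMost)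
  hence "(\<lambda>n. \<Prod>k<n. Q k u) \<longlonglongrightarrow> (\<Prod>k. Q k u)"
    by (rule filterlim_sequentially_Suc[THEN iffD1])
  hence "(\<lambda>N. PN w1 w2 N u) \<longlonglongrightarrow> u * (\<Prod>k. Q k u)"
    unfolding PN_Q by (intro tendsto_mult tendsto_const)
  with PN_lim[of u] show ?thesis using LIMSEQ_unique by blast
qed

lemma shell_of:
  assumes "p \<noteq> (0,0)"
  shows "\<exists>k. p \<in> sqr (Suc k) - sqr k"
proof -
  obtain a b where p: "p = (a, b)" by force
  define M where "M = nat (max \<bar>a\<bar> \<bar>b\<bar>)"
  have "M \<ge> 1" using assms by (auto simp: M_def p)
  then obtain k where k: "M = Suc k" by (cases M) auto
  have "p \<in> sqr (Suc k)" using k by (auto simp: p mem_sqr M_def)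
  moreover have "p \<notin> sqr k" using k by (auto simp: p mem_sqr M_def)
  ultimately show ?thesis by blast
qed

lemma sig_eq_0_iff: "sig u = 0 \<longleftrightarrow> u \<in> lattice w1 w2"
proof
  assume "sig u = 0"
  hence "u = 0 \<or> (\<Prod>k. Q k u) = 0" by (simp add: sig_eq)
  thus "u \<in> lattice w1 w2"
  proof
    assume "u = 0" thus ?thesis by (auto simp: lattice_wl intro: image_eqI[of _ _ "(0,0)"])
  next
    assume "(\<Prod>k. Q k u) = 0"
    hence "0 \<in> range (\<lambda>k. Q k u)"
      using has_prod_eq_0_iff[OF convergent_prod_has_prod[OF Q_convergent]] by simp
    then obtain k where "Q k u = 0" by auto
    thus ?thesis by (auto simp: Q_eq_0_iff lattice_wl)
  qed
next
  assume "u \<in> lattice w1 w2"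
  then obtain p where p: "u = wl w1 w2 p" by (auto simp: lattice_wl)
  show "sig u = 0"
  proof (cases "p = (0,0)")
    case True thus ?thesis by (simp add: sig_eq p)
  next
    case False
    then obtain k where k: "p \<in> sqr (Suc k) - sqr k" using shell_of by blast
    hence "Q k u = 0" using Q_eq_0_iff p by blast
    hence "0 \<in> range (\<lambda>k. Q k u)" by (metis rangeI)
    hence "(\<Prod>k. Q k u) = 0"
      using has_prod_eq_0_iff[OF convergent_prod_has_prod[OF Q_convergent]] by simp
    thus ?thesis by (simp add: sig_eq)
  qed
qed

lemma sig_0 [simp]: "sig 0 = 0"
  by (simp add: sig_eq)

lemma fac_uminus: "fac w1 w2 (-u) p = fac w1 w2 u (-p)"
  by (simp add: fac_def Let_def wl_minus)

lemma PN_uminus: "PN w1 w2 N (-u) = - PN w1 w2 N u"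
proof -
  have "(\<Prod>p\<in>sqr N - {(0,0)}. fac w1 w2 (-u) p) = (\<Prod>p\<in>sqr N - {(0,0)}. fac w1 w2 u p)"
    unfolding fac_uminus
    by (rule prod.reindex_bij_witness[of _ uminus uminus]) (auto simp: sqr_def)
  thus ?thesis by (simp add: PN_def)
qed

lemma sig_odd: "sig (-u) = - sig u"
proof -
  have "(\<lambda>N. PN w1 w2 N (-u)) \<longlonglongrightarrow> - sig u"
    unfolding PN_uminus by (intro tendsto_minus PN_lim)
  with PN_lim[of "-u"] show ?thesis using LIMSEQ_unique by blast
qed

lemma deriv_PN_0: "deriv (PN w1 w2 N) 0 = 1"
proof -
  define h where "h = (\<lambda>u. \<Prod>p\<in>sqr N - {(0,0)}. fac w1 w2 u p)"
  have "PN w1 w2 N = (\<lambda>u. u * h u)" by (rule ext) (simp add: PN_def h_def)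
  moreover have hh: "h holomorphic_on UNIV"
    unfolding h_def fac_def Let_def
    by (intro holomorphic_intros) (auto simp: wl_eq_0_iff)
  have hd: "(h has_field_derivative deriv h 0) (at 0)"
    using holomorphic_derivI[OF hh] by auto
  have "((\<lambda>u. u * h u) has_field_derivative (1 * h 0 + deriv h 0 * 0)) (at 0)"
    by (rule DERIV_mult[OF DERIV_ident hd])
  moreover have "h 0 = 1" by (simp add: h_def fac_def)
  ultimately show ?thesis by (simp add: DERIV_imp_deriv)
qed

lemma deriv_sig_0: "deriv sig 0 = 1"
  using hderiv_lim[of 1 0] by (simp add: deriv_PN_0 LIMSEQ_const_iff)

lemma lat_add: "u \<in> lattice w1 w2 \<Longrightarrow> v \<in> lattice w1 w2 \<Longrightarrow> u + v \<in> lattice w1 w2"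
  by (auto simp: lattice_wl wl_add[symmetric])
lemma lat_minus: "u \<in> lattice w1 w2 \<Longrightarrow> - u \<in> lattice w1 w2"
  by (auto simp: lattice_wl wl_minus[symmetric])
lemma lat_diff: "u \<in> lattice w1 w2 \<Longrightarrow> v \<in> lattice w1 w2 \<Longrightarrow> u - v \<in> lattice w1 w2"
  by (auto simp: lattice_wl wl_diff[symmetric])
lemma lat_0 [simp]: "0 \<in> lattice w1 w2"
  by (auto simp: lattice_wl intro: image_eqI[of _ _ "(0,0)"])
lemma lat_shift: "v \<in> lattice w1 w2 \<Longrightarrow> u + v \<in> lattice w1 w2 \<longleftrightarrow> u \<in> lattice w1 w2"
  by (metis add_diff_cancel lat_add lat_diff)

lemma lat_finite_ball: "finite (lattice w1 w2 \<inter> cball z r)"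
proof -
  define M where "M = nat \<lceil>(r + norm z) / c\<rceil>"
  have "lattice w1 w2 \<inter> cball z r \<subseteq> wl w1 w2 ` sqr M"
  proof
    fix u assume u: "u \<in> lattice w1 w2 \<inter> cball z r"
    then obtain p where p: "u = wl w1 w2 p" by (auto simp: lattice_wl)
    have "norm u \<le> r + norm z" using u norm_triangle_ineq2[of u z]
      by (auto simp: dist_norm norm_minus_commute)
    with c_le[of p] p have "c * max \<bar>real_of_int (fst p)\<bar> \<bar>real_of_int (snd p)\<bar> \<le> r + norm z" by simp
    hence "max \<bar>real_of_int (fst p)\<bar> \<bar>real_of_int (snd p)\<bar> \<le> (r + norm z) / c"
      using c_pos by (simp add: pos_le_divide_eq[OF c_pos] mult.commute)
    hence "\<bar>real_of_int (fst p)\<bar> \<le> real M" "\<bar>real_of_int (snd p)\<bar> \<le> real M"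
      unfolding M_def by (meson max.boundedE real_nat_ceiling_ge order.trans)+
    hence "\<bar>fst p\<bar> \<le> int M" "\<bar>snd p\<bar> \<le> int M" by linarith+
    hence "p \<in> sqr M" by (cases p) (simp add: mem_sqr)
    thus "u \<in> wl w1 w2 ` sqr M" using p by auto
  qed
  thus ?thesis by (rule finite_subset) auto
qed

lemma lat_not_islimpt: "\<not> z islimpt lattice w1 w2"
proof -
  have "finite (lattice w1 w2 \<inter> ball z 1)"
    by (rule finite_subset[OF _ lat_finite_ball[of z 1]]) auto
  thus ?thesis unfolding islimpt_eq_infinite_ball
    by (intro notI) (drule spec[of _ 1], simp)
qed

lemma lat_closed: "closed (lattice w1 w2)"
  using lat_not_islimpt closed_limpt by blast

lemma open_nonlat: "open (- lattice w1 w2)"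
  using lat_closed by (simp add: open_Compl)

lemma countable_lat: "countable (lattice w1 w2)"
  by (simp add: lattice_wl)

lemma ev_nonlat: "eventually (\<lambda>y. y \<notin> lattice w1 w2) (at z)"
  using lat_not_islimpt[of z] by (simp add: islimpt_iff_eventually)

lemma ev_nonlat_nhds: "z \<notin> lattice w1 w2 \<Longrightarrow> eventually (\<lambda>y. y \<notin> lattice w1 w2) (nhds z)"
  unfolding eventually_nhds using open_nonlat by (intro exI[of _ "- lattice w1 w2"]) auto

end

context lat
begin

abbreviation zt where "zt \<equiv> wzeta w1 w2"

definition Z2 where "Z2 u = (deriv ^^ 2) sig u / sig u - (zt u)^2"
definition Z3 where "Z3 u = (deriv ^^ 3) sig u / sig u - (zt u)^3 - 3 * zt u * Z2 u"

definition LN where "LN N u = (\<Sum>p\<in>sqr N. 1 / (u - wl w1 w2 p)) + (\<Sum>p\<in>sqr N - {(0,0)}. 1 / wl w1 w2 p + u / (wl w1 w2 p)^2)"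
definition L1 where "L1 N u = (\<Sum>p\<in>sqr N. - 1 / (u - wl w1 w2 p)^2) + (\<Sum>p\<in>sqr N - {(0,0)}. 1 / (wl w1 w2 p)^2)"
definition L2 where "L2 N u = (\<Sum>p\<in>sqr N. 2 / (u - wl w1 w2 p)^3)"

lemma d_inv: fixes z w :: complex shows "z \<noteq> w \<Longrightarrow> ((\<lambda>u. 1 / (u - w)) has_field_derivative - 1 / (z - w)^2) (at z)"
  by (auto intro!: derivative_eq_intros simp: power2_eq_square field_simps)

lemma d_inv2: fixes z w :: complex shows "z \<noteq> w \<Longrightarrow> ((\<lambda>u. - 1 / (u - w)^2) has_field_derivative 2 / (z - w)^3) (at z)"
proof -
  assume "z \<noteq> w"
  define a where "a = z - w"
  hence nz: "a \<noteq> 0" using \<open>z \<noteq> w\<close> by simp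
  have "((\<lambda>u. - 1 / (u - w)^2) has_field_derivative (0 * (z - w)^2 - (-1) * (of_nat 2 * ((1 - 0) * (z - w) ^ (2 - Suc 0)))) / ((z - w)^2 * (z - w)^2)) (at z)"
    by (intro DERIV_divide DERIV_const DERIV_power DERIV_diff DERIV_ident) (use nz in \<open>auto simp: a_def\<close>)
  moreover have "(0 * a^2 - (-1) * (of_nat 2 * ((1 - 0) * a ^ (2 - Suc 0)))) / (a^2 * a^2) = 2 / a^3"
    using nz by (simp add: power2_eq_square power3_eq_cube field_simps)
  ultimately show ?thesis by (simp add: a_def)
qed

lemma d_lin: fixes z w :: complex shows "w \<noteq> 0 \<Longrightarrow> ((\<lambda>u. 1 / w + u / w^2) has_field_derivative 1 / w^2) (at z)"
  by (auto intro!: derivative_eq_intros simp: power2_eq_square field_simps)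

lemma fac_deriv0:
  fixes u w :: complex
  assumes "w \<noteq> 0" "u \<noteq> w"
  shows "((\<lambda>u. (1 - u / w) * exp (u / w + u^2 / (2 * w^2))) has_field_derivative (1 - u / w) * exp (u / w + u^2 / (2 * w^2)) * (1 / (u - w) + 1 / w + u / w^2)) (at u)"
  using assms by (auto intro!: derivative_eq_intros simp: power2_eq_square field_simps)

lemma d_const: "((\<lambda>u. a) has_field_derivative 0) (at z)"
  by simp

definition ON where "ON N = - (wl w1 w2 ` sqr N)"

lemma ON_open: "open (ON N)"
  unfolding ON_def by (intro open_Compl finite_imp_closed) auto

lemma nonlat_ON: "u \<notin> lattice w1 w2 \<Longrightarrow> u \<in> ON N"
  by (auto simp: ON_def lattice_wl)

lemma LN_deriv: "u \<in> ON N \<Longrightarrow> (LN N has_field_derivative L1 N u) (at u)"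
  unfolding LN_def[abs_def] L1_def
  by (intro DERIV_add DERIV_sum d_inv d_lin) (auto simp: ON_def wl_eq_0_iff)

lemma L1_deriv: "u \<in> ON N \<Longrightarrow> (L1 N has_field_derivative L2 N u) (at u)"
proof -
  assume u: "u \<in> ON N"
  have "((\<lambda>u. (\<Sum>p\<in>sqr N. - 1 / (u - wl w1 w2 p)^2) + (\<Sum>p\<in>sqr N - {(0,0)}. 1 / (wl w1 w2 p)^2))
        has_field_derivative (\<Sum>p\<in>sqr N. 2 / (u - wl w1 w2 p)^3) + (\<Sum>p\<in>sqr N - {(0,0)}. 0)) (at u)"
    by (intro DERIV_add DERIV_sum d_inv2 d_const) (use u in \<open>auto simp: ON_def\<close>)
  thus ?thesis unfolding L1_def[abs_def] L2_def by simp
qed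

lemma fac_deriv:
  assumes "w = wl w1 w2 p" "w \<noteq> 0" "u \<noteq> w"
  shows "((\<lambda>u. fac w1 w2 u p) has_field_derivative fac w1 w2 u p * (1 / (u - w) + 1 / w + u / w^2)) (at u)"
  using fac_deriv0[OF assms(2,3)] assms(1) by (simp add: fac_def Let_def)

lemma PN_deriv:
  assumes u: "u \<in> ON N"
  shows "(PN w1 w2 N has_field_derivative PN w1 w2 N u * LN N u) (at u)"
proof -
  define S where "S = sqr N - {(0,0)}"
  have u0: "u \<noteq> 0" using u by (auto simp: ON_def intro: image_eqI[of _ _ "(0,0)"] simp: mem_sqr)
  have uS: "u \<noteq> wl w1 w2 p" if "p \<in> sqr N" for p using u that by (auto simp: ON_def)
  have wS: "wl w1 w2 p \<noteq> 0" if "p \<in> S" for p using that by (auto simp: S_def wl_eq_0_iff)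
  define h where "h = (\<lambda>u. \<Prod>p\<in>S. fac w1 w2 u p)"
  define T where "T = (\<Sum>p\<in>S. 1 / (u - wl w1 w2 p) + 1 / wl w1 w2 p + u / (wl w1 w2 p)^2)"
  have "(h has_field_derivative (h u * (\<Sum>p\<in>S. fac w1 w2 u p * (1 / (u - wl w1 w2 p) + 1 / wl w1 w2 p + u / (wl w1 w2 p)^2) / fac w1 w2 u p))) (at u)"
    unfolding h_def
    by (rule has_field_derivative_prod'[where f = "\<lambda>p u. fac w1 w2 u p"])
       (use wS uS in \<open>auto simp: S_def fac_eq_0_iff intro!: fac_deriv\<close>)
  moreover have "(\<Sum>p\<in>S. fac w1 w2 u p * (1 / (u - wl w1 w2 p) + 1 / wl w1 w2 p + u / (wl w1 w2 p)^2) / fac w1 w2 u p) = T"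
    unfolding T_def using wS uS by (intro sum.cong refl) (auto simp: fac_eq_0_iff S_def)
  ultimately have hd: "(h has_field_derivative h u * T) (at u)" by simp
  have PN_eq: "PN w1 w2 N = (\<lambda>u. u * h u)" by (rule ext) (simp add: PN_def h_def S_def)
  have LNeq: "LN N u = 1 / u + T"
  proof -
    have sq: "sqr N = insert (0,0) S" by (auto simp: S_def sqr_def)
    have "LN N u = 1 / u + (\<Sum>p\<in>S. 1 / (u - wl w1 w2 p)) + (\<Sum>p\<in>S. 1 / wl w1 w2 p + u / (wl w1 w2 p)^2)"
      unfolding LN_def sq by (subst sum.insert) (auto simp: S_def)
    also have "\<dots> = 1 / u + T" by (simp add: T_def sum.distrib add.assoc)
    finally show ?thesis .
  qed
  have LN2: "u * LN N u = 1 + T * u" using LNeq u0 by (simp add: field_simps)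
  have "u * h u * LN N u = h u * (u * LN N u)" by (simp add: mult_ac)
  also have "\<dots> = 1 * h u + h u * T * u" unfolding LN2 by (simp add: algebra_simps)
  finally have eq0: "u * h u * LN N u = 1 * h u + h u * T * u" .
  show ?thesis unfolding PN_eq
    by (rule DERIV_cong[OF DERIV_mult[OF DERIV_ident hd]]) (rule eq0[symmetric])
qed

lemma PN_nz: "u \<notin> lattice w1 w2 \<Longrightarrow> PN w1 w2 N u \<noteq> 0"
proof -
  assume u: "u \<notin> lattice w1 w2"
  have "u \<noteq> 0" using u by auto
  moreover have "fac w1 w2 u p \<noteq> 0" if "p \<in> sqr N - {(0,0)}" for p
    using that u by (subst fac_eq_0_iff) (auto simp: wl_eq_0_iff lattice_wl)
  ultimately show ?thesis by (simp add: PN_def)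
qed

lemma deriv_funpow2: "(deriv ^^ 2) f = deriv (deriv f)"
  by (simp add: numeral_2_eq_2)
lemma deriv_funpow3: "(deriv ^^ 3) f = deriv (deriv (deriv f))"
  by (simp add: numeral_3_eq_3)

lemma PN_derivs:
  assumes u: "u \<in> ON N"
  shows "deriv (PN w1 w2 N) u = PN w1 w2 N u * LN N u"
    and "(deriv ^^ 2) (PN w1 w2 N) u = PN w1 w2 N u * (LN N u ^ 2 + L1 N u)"
    and "(deriv ^^ 3) (PN w1 w2 N) u = PN w1 w2 N u * (LN N u ^ 3 + 3 * LN N u * L1 N u + L2 N u)"
proof -
  let ?P = "PN w1 w2 N"
  have D1: "deriv ?P v = ?P v * LN N v" if "v \<in> ON N" for v
    using PN_deriv[OF that] by (rule DERIV_imp_deriv)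
  have ev: "eventually (\<lambda>w. w \<in> ON N) (nhds v)" if "v \<in> ON N" for v
    using ON_open that by (rule eventually_nhds_in_open)
  have D2: "deriv (deriv ?P) v = ?P v * (LN N v ^ 2 + L1 N v)" if v: "v \<in> ON N" for v
  proof -
    have "deriv (deriv ?P) v = deriv (\<lambda>v. ?P v * LN N v) v"
      by (rule deriv_cong_ev[OF eventually_mono[OF ev[OF v]]]) (auto simp: D1)
    also have "\<dots> = ?P v * LN N v * LN N v + L1 N v * ?P v"
      by (rule DERIV_imp_deriv[OF DERIV_mult[OF PN_deriv[OF v] LN_deriv[OF v]]])
    finally show ?thesis by (simp add: algebra_simps power2_eq_square)
  qed
  have "deriv (deriv (deriv ?P)) u = deriv (\<lambda>v. ?P v * (LN N v ^ 2 + L1 N v)) u"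
    by (rule deriv_cong_ev[OF eventually_mono[OF ev[OF u]]]) (auto simp: D2)
  also have "\<dots> = ?P u * LN N u * (LN N u ^ 2 + L1 N u) + (of_nat 2 * (L1 N u * LN N u ^ (2 - Suc 0)) + L2 N u) * ?P u"
    by (rule DERIV_imp_deriv[OF DERIV_mult[OF PN_deriv[OF u] DERIV_add[OF DERIV_power[OF LN_deriv[OF u]] L1_deriv[OF u]]]])
  finally show "(deriv ^^ 3) (PN w1 w2 N) u = PN w1 w2 N u * (LN N u ^ 3 + 3 * LN N u * L1 N u + L2 N u)"
    by (simp add: deriv_funpow3 algebra_simps power2_eq_square power3_eq_cube)
  show "deriv (PN w1 w2 N) u = PN w1 w2 N u * LN N u" by (rule D1[OF u])
  show "(deriv ^^ 2) (PN w1 w2 N) u = PN w1 w2 N u * (LN N u ^ 2 + L1 N u)"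
    by (simp add: deriv_funpow2 D2[OF u])
qed

lemma L2_lim:
  assumes u: "u \<notin> lattice w1 w2"
  shows "(\<lambda>N. L2 N u) \<longlonglongrightarrow> Z3 u"
proof -
  define y where "y = (\<lambda>k N. (deriv ^^ k) (PN w1 w2 N) u)"
  define s where "s = (\<lambda>k. (deriv ^^ k) sig u)"
  have ylim: "(\<lambda>N. y k N) \<longlonglongrightarrow> s k" for k unfolding y_def s_def by (rule hderiv_lim)
  have s0: "s 0 \<noteq> 0" using u by (simp add: s_def sig_eq_0_iff)
  have y0: "y 0 N \<noteq> 0" for N using PN_nz[OF u] by (simp add: y_def)
  have uO: "u \<in> ON N" for N using u by (rule nonlat_ON)
  have eL: "LN N u = y 1 N / y 0 N" for N using PN_derivs(1)[OF uO] y0[of N] by (simp add: y_def)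
  have eL1: "L1 N u = y 2 N / y 0 N - (y 1 N / y 0 N)^2" for N
    using PN_derivs(2)[OF uO] PN_derivs(1)[OF uO] y0[of N] by (simp add: y_def field_simps)
  have eL2: "L2 N u = y 3 N / y 0 N - (y 1 N / y 0 N)^3 - 3 * (y 1 N / y 0 N) * (y 2 N / y 0 N - (y 1 N / y 0 N)^2)" for N
    using PN_derivs[OF uO] y0[of N] by (simp add: y_def field_simps)
  have "(\<lambda>N. y 3 N / y 0 N - (y 1 N / y 0 N)^3 - 3 * (y 1 N / y 0 N) * (y 2 N / y 0 N - (y 1 N / y 0 N)^2))
        \<longlonglongrightarrow> s 3 / s 0 - (s 1 / s 0)^3 - 3 * (s 1 / s 0) * (s 2 / s 0 - (s 1 / s 0)^2)"
    by (intro tendsto_intros ylim s0)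
  moreover have "s 3 / s 0 - (s 1 / s 0)^3 - 3 * (s 1 / s 0) * (s 2 / s 0 - (s 1 / s 0)^2) = Z3 u"
    by (simp add: Z3_def Z2_def wzeta_def s_def)
  ultimately show ?thesis using eL2 by simp
qed

lemma hderiv_sig [derivative_intros]:
  "((deriv ^^ n) sig has_field_derivative (deriv ^^ Suc n) sig z) (at z)"
proof -
  have "(deriv ^^ n) sig holomorphic_on UNIV" by (intro holomorphic_higher_deriv sig_holo) auto
  hence "((deriv ^^ n) sig has_field_derivative deriv ((deriv ^^ n) sig) z) (at z)"
    using holomorphic_derivI by blast
  thus ?thesis by simp
qed

lemma zeta_deriv:
  assumes u: "u \<notin> lattice w1 w2"
  shows "(zt has_field_derivative Z2 u) (at u)"
proof -
  have s0: "sig u \<noteq> 0" using u by (simp add: sig_eq_0_iff)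
  have "((\<lambda>u. deriv sig u / sig u) has_field_derivative
         ((deriv ^^ 2) sig u * sig u - deriv sig u * deriv sig u) / (sig u * sig u)) (at u)"
    using DERIV_divide[OF hderiv_sig[of 1] sig_deriv[of u UNIV] s0] by (simp add: numeral_2_eq_2)
  moreover have "((deriv ^^ 2) sig u * sig u - deriv sig u * deriv sig u) / (sig u * sig u) = Z2 u"
    using s0 by (simp add: Z2_def wzeta_def field_simps power2_eq_square)
  moreover have "zt = (\<lambda>u. deriv sig u / sig u)" by (rule ext) (simp add: wzeta_def)
  ultimately show ?thesis by simp
qed

lemma Z2_fun: "Z2 = (\<lambda>u. (deriv ^^ 2) sig u / sig u - (zt u)^2)"
  by (rule ext) (simp add: Z2_def)

lemma Z2_deriv:
  assumes u: "u \<notin> lattice w1 w2"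
  shows "(Z2 has_field_derivative Z3 u) (at u)"
proof -
  have s0: "sig u \<noteq> 0" using u by (simp add: sig_eq_0_iff)
  show ?thesis unfolding Z2_fun
    by (rule DERIV_cong[OF DERIV_diff[OF DERIV_divide[OF hderiv_sig[of 2] sig_deriv[of u UNIV] s0] DERIV_power[OF zeta_deriv[OF u], of 2]]])
       (use s0 in \<open>simp add: Z3_def Z2_def wzeta_def field_simps power2_eq_square power3_eq_cube numeral_3_eq_3 numeral_2_eq_2\<close>)
qed

end

lemma notin_sqr_max: assumes "p \<notin> sqr k"
  shows "real (Suc k) \<le> max \<bar>real_of_int (fst p)\<bar> \<bar>real_of_int (snd p)\<bar>"
proof -
  obtain m j where p: "p = (m, j)" by force
  from assms have "\<not> (\<bar>m\<bar> \<le> int k \<and> \<bar>j\<bar> \<le> int k)" by (simp add: p mem_sqr)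
  hence "\<bar>m\<bar> \<ge> int k + 1 \<or> \<bar>j\<bar> \<ge> int k + 1" by linarith
  hence "\<bar>real_of_int m\<bar> \<ge> real k + 1 \<or> \<bar>real_of_int j\<bar> \<ge> real k + 1"
  proof (elim disjE)
    assume h: "int k + 1 \<le> \<bar>m\<bar>"
    have "real_of_int (int k + 1) \<le> real_of_int \<bar>m\<bar>" using h by (simp only: of_int_le_iff)
    thus ?thesis by simp
  next
    assume h: "int k + 1 \<le> \<bar>j\<bar>"
    have "real_of_int (int k + 1) \<le> real_of_int \<bar>j\<bar>" using h by (simp only: of_int_le_iff)
    thus ?thesis by simp
  qed
  thus ?thesis by (auto simp: p max_def)
qed

context lat
begin

lemma L2_shift_bound:
  assumes e: "\<bar>fst e\<bar> \<le> 1" "\<bar>snd e\<bar> \<le> 1" and N: "N \<ge> 1" "c * real N \<ge> 2 * norm u"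
  shows "norm (L2 N (u + wl w1 w2 e) - L2 N u) \<le> 400 / (c^3 * real N)"
proof -
  define f where "f = (\<lambda>q. 2 / (u - wl w1 w2 q)^3)"
  define A where "A = sqr N"
  define B where "B = (\<lambda>p. p - e) ` sqr N"
  define K where "K = sqr (Suc N) - sqr (N - 1)"
  have finA: "finite A" and finB: "finite B" by (auto simp: A_def B_def)
  have "L2 N (u + wl w1 w2 e) = (\<Sum>p\<in>sqr N. f (p - e))"
    unfolding L2_def f_def by (intro sum.cong refl) (simp add: wl_diff algebra_simps)
  also have "\<dots> = sum f B" unfolding B_def
    by (subst sum.reindex) (auto simp: inj_on_def)
  finally have 1: "L2 N (u + wl w1 w2 e) = sum f B" .
  have 2: "L2 N u = sum f A" by (simp add: L2_def f_def A_def)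
  have "sum f B - sum f A = sum f (B - A) - sum f (A - B)"
    using sum.Int_Diff[OF finB, of f A] sum.Int_Diff[OF finA, of f B] by (simp add: Int_commute)
  hence "norm (sum f B - sum f A) \<le> norm (sum f (B - A)) + norm (sum f (A - B))"
    by (simp add: norm_triangle_ineq4)
  also have "\<dots> \<le> (\<Sum>q\<in>B - A. norm (f q)) + (\<Sum>q\<in>A - B. norm (f q))"
    by (intro add_mono norm_sum)
  also have "\<dots> = (\<Sum>q\<in>(B - A) \<union> (A - B). norm (f q))"
    by (rule sum.union_disjoint[symmetric]) (use finA finB in auto)
  also have "\<dots> \<le> (\<Sum>q\<in>K. norm (f q))"
  proof (rule sum_mono2)
    show "finite K" by (simp add: K_def)
    show "(B - A) \<union> (A - B) \<subseteq> K"
    proof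
      fix q assume q: "q \<in> (B - A) \<union> (A - B)"
      obtain a b where eab: "e = (a, b)" by force
      show "q \<in> K"
      proof (cases "q \<in> B - A")
        case True
        then obtain p where p: "p \<in> sqr N" "q = p - e" "q \<notin> sqr N" by (auto simp: A_def B_def)
        have "q \<in> sqr (Suc N)" using p(1,2) e by (cases p) (auto simp: mem_sqr eab)
        moreover have "q \<notin> sqr (N - 1)" using p(3) sqr_mono[of "N - 1" N] by auto
        ultimately show ?thesis by (simp add: K_def)
      next
        case False
        with q have q2: "q \<in> sqr N" "q \<notin> B" by (auto simp: A_def)
        have "q \<in> sqr (Suc N)" using q2(1) sqr_mono[of N "Suc N"] by auto
        moreover have "q \<notin> sqr (N - 1)"
        proof
          assume qN: "q \<in> sqr (N - 1)"
          have "q + e \<in> sqr N" using qN e N by (cases q) (auto simp: mem_sqr eab)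
          hence "q \<in> B" unfolding B_def by (rule rev_image_eqI) simp
          with q2 show False by simp
        qed
        ultimately show ?thesis by (simp add: K_def)
      qed
    qed
  qed auto
  also have "\<dots> \<le> (\<Sum>q\<in>K. 16 / (c^3 * real N^3))"
  proof (rule sum_mono)
    fix q assume q: "q \<in> K"
    have Npos: "real N > 0" using N by simp
    have "q \<notin> sqr (N - 1)" using q by (simp add: K_def)
    from notin_sqr_max[OF this] N have "real N \<le> max \<bar>real_of_int (fst q)\<bar> \<bar>real_of_int (snd q)\<bar>" by simp
    hence "c * real N \<le> norm (wl w1 w2 q)" using c_le[of q] c_pos
      by (meson mult_left_mono less_imp_le order.trans)
    hence d: "norm (u - wl w1 w2 q) \<ge> c * real N / 2"
      using N(2) norm_triangle_ineq2[of "wl w1 w2 q" u] by (simp add: norm_minus_commute)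
    have cN: "c * real N / 2 > 0" using c_pos Npos by simp
    have "norm (f q) = 2 / norm (u - wl w1 w2 q)^3" by (simp add: f_def norm_divide norm_power)
    also have "\<dots> \<le> 2 / (c * real N / 2)^3"
      using d cN by (intro divide_left_mono power_mono mult_pos_pos zero_less_power) auto
    also have "\<dots> = 16 / (c^3 * real N^3)" by (simp add: power_divide power_mult_distrib)
    finally show "norm (f q) \<le> 16 / (c^3 * real N^3)" .
  qed
  also have "\<dots> = real (card K) * (16 / (c^3 * real N^3))" by simp
  also have "\<dots> \<le> (25 * real N^2) * (16 / (c^3 * real N^3))"
  proof (rule mult_right_mono)
    have "card K \<le> card (sqr (Suc N))" unfolding K_def by (rule card_mono) auto
    also have "\<dots> = (2 * Suc N + 1)^2" by (rule card_sqr)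
    finally have "real (card K) \<le> real ((2 * Suc N + 1)^2)" by linarith
    also have "\<dots> = (2 * real N + 3)^2" by simp
    also have "\<dots> \<le> (5 * real N)^2" using N by (intro power_mono) auto
    finally show "real (card K) \<le> 25 * real N^2" by (simp add: power_mult_distrib)
  qed (use c_pos in auto)
  also have "\<dots> = 400 / (c^3 * real N)"
    using N c_pos by (simp add: field_simps power2_eq_square power3_eq_cube)
  finally show ?thesis using 1 2 by simp
qed

lemma Z3_shift:
  assumes u: "u \<notin> lattice w1 w2" and e: "\<bar>fst e\<bar> \<le> 1" "\<bar>snd e\<bar> \<le> 1"
  shows "Z3 (u + wl w1 w2 e) = Z3 u"
proof -
  have u': "u + wl w1 w2 e \<notin> lattice w1 w2"
    using u lat_shift[of "wl w1 w2 e" u] by (auto simp: lattice_wl)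
  have lim1: "(\<lambda>N. L2 N (u + wl w1 w2 e) - L2 N u) \<longlonglongrightarrow> Z3 (u + wl w1 w2 e) - Z3 u"
    by (intro tendsto_diff L2_lim u u')
  have lim2: "(\<lambda>N. L2 N (u + wl w1 w2 e) - L2 N u) \<longlonglongrightarrow> 0"
  proof (rule Lim_null_comparison)
    have "eventually (\<lambda>N. N \<ge> 1) sequentially" by (rule eventually_ge_at_top)
    moreover have "eventually (\<lambda>N. c * real N \<ge> 2 * norm u) sequentially"
    proof -
      have "filterlim (\<lambda>N. c * real N) at_top sequentially"
        using c_pos by (intro filterlim_tendsto_pos_mult_at_top[OF tendsto_const] filterlim_real_sequentially) auto
      thus ?thesis by (simp add: filterlim_at_top)
    qed
    ultimately show "eventually (\<lambda>N. norm (L2 N (u + wl w1 w2 e) - L2 N u) \<le> 400 / (c^3 * real N)) sequentially"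
      by eventually_elim (rule L2_shift_bound[OF e])
    show "(\<lambda>N. 400 / (c^3 * real N)) \<longlonglongrightarrow> 0"
      by (intro tendsto_divide_0[OF tendsto_const] filterlim_at_top_imp_at_infinity filterlim_tendsto_pos_mult_at_top[OF tendsto_const]
                filterlim_real_sequentially) (use c_pos in auto)
  qed
  from LIMSEQ_unique[OF lim1 lim2] show ?thesis by simp
qed

end

context lat
begin

lemma nonlat_connected: "connected (- lattice w1 w2)"
proof -
  have "connected (UNIV - lattice w1 w2)"
    by (rule connected_open_diff_countable) (auto simp: countable_lat)
  thus ?thesis by (simp add: Compl_eq_Diff_UNIV)
qed

lemma const_on_nonlat:
  assumes "\<And>z. z \<notin> lattice w1 w2 \<Longrightarrow> (f has_field_derivative 0) (at z)"
  obtains C where "\<And>z. z \<notin> lattice w1 w2 \<Longrightarrow> f z = C"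
proof -
  have "f constant_on (- lattice w1 w2)"
    by (rule has_field_derivative_0_imp_constant_on) (use assms nonlat_connected open_nonlat in auto)
  thus ?thesis using that by (auto simp: constant_on_def)
qed

lemma half_nonlat: assumes "e = (1,0) \<or> e = (0,1)" shows "wl w1 w2 e / 2 \<notin> lattice w1 w2"
proof
  assume "wl w1 w2 e / 2 \<in> lattice w1 w2"
  then obtain p where p: "wl w1 w2 e / 2 = wl w1 w2 p" by (auto simp: lattice_wl)
  hence "wl w1 w2 e = wl w1 w2 (p + p)" by (simp add: wl_add field_simps)
  hence "e = p + p" by (simp add: wl_inj)
  with assms show False by (cases p) (auto; presburger)
qed

lemma hderiv_sig_uminus: "(deriv ^^ n) sig (-z) = - ((-1)^n * (deriv ^^ n) sig z)"
proof -
  have eq: "(\<lambda>w. sig ((-1) * w + 0)) = (\<lambda>w. (-1) * sig w)" by (simp add: sig_odd fun_eq_iff)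
  have "(deriv ^^ n) (\<lambda>w. sig ((-1) * w + 0)) z = (-1)^n * (deriv ^^ n) sig ((-1) * z + 0)"
    by (rule higher_deriv_compose_linear'[where T = UNIV and S = UNIV]) (auto intro: sig_holo)
  also have "(deriv ^^ n) (\<lambda>w. sig ((-1) * w + 0)) z = (-1) * (deriv ^^ n) sig z"
    unfolding eq by (rule higher_deriv_cmult[where A = UNIV]) (auto intro: sig_holo)
  finally have "(-1)^n * (deriv ^^ n) sig (-z) = - (deriv ^^ n) sig z" by simp
  hence "(-1)^n * ((-1)^n * (deriv ^^ n) sig (-z)) = (-1)^n * (- (deriv ^^ n) sig z)" by simp
  thus ?thesis by (simp add: power_mult_distrib[symmetric])
qed

lemma zt_odd: "zt (-u) = - zt u"
  using hderiv_sig_uminus[of 1 u] by (simp add: wzeta_def sig_odd)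

lemma Z2_even: "Z2 (-u) = Z2 u"
  using hderiv_sig_uminus[of 2 u] by (simp add: Z2_def zt_odd sig_odd)

lemma shift_nonlat: "v \<in> lattice w1 w2 \<Longrightarrow> u + v \<notin> lattice w1 w2 \<longleftrightarrow> u \<notin> lattice w1 w2"
  using lat_shift by blast

lemma Z2_shift:
  assumes e: "e = (1,0) \<or> e = (0,1)" and u: "u \<notin> lattice w1 w2"
  shows "Z2 (u + wl w1 w2 e) = Z2 u"
proof -
  define l where "l = wl w1 w2 e"
  have l: "l \<in> lattice w1 w2" by (auto simp: l_def lattice_wl)
  have D: "((\<lambda>z. Z2 (z + l) - Z2 z) has_field_derivative 0) (at z)" if z: "z \<notin> lattice w1 w2" for z
  proof -
    have z': "z + l \<notin> lattice w1 w2" using z l shift_nonlat by blast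
    have "((\<lambda>z. Z2 (z + l)) has_field_derivative Z3 (z + l)) (at z)"
      using Z2_deriv[OF z'] by (simp add: DERIV_shift)
    moreover have "Z3 (z + l) = Z3 z" unfolding l_def by (rule Z3_shift[OF z]) (use e in auto)
    ultimately show "((\<lambda>z. Z2 (z + l) - Z2 z) has_field_derivative 0) (at z)"
      using DERIV_diff[OF _ Z2_deriv[OF z]] by fastforce
  qed
  obtain C where C: "\<And>z. z \<notin> lattice w1 w2 \<Longrightarrow> Z2 (z + l) - Z2 z = C"
    using const_on_nonlat[OF D] by blast
  have h: "- l / 2 \<notin> lattice w1 w2"
    using half_nonlat[OF e] lat_minus unfolding l_def by fastforce
  have "C = Z2 (- l / 2 + l) - Z2 (- l / 2)" using C[OF h] by simp
  also have "- l / 2 + l = l / 2" by simp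
  also have "Z2 (- l / 2) = Z2 (l / 2)" using Z2_even[of "l / 2"] by simp
  finally have "C = 0" by simp
  with C[OF u] show ?thesis by (simp add: l_def)
qed

lemma zt_shift_const:
  assumes e: "e = (1,0) \<or> e = (0,1)"
  obtains a where "\<And>u. u \<notin> lattice w1 w2 \<Longrightarrow> zt (u + wl w1 w2 e) = zt u + a"
proof -
  define l where "l = wl w1 w2 e"
  have l: "l \<in> lattice w1 w2" by (auto simp: l_def lattice_wl)
  have D: "((\<lambda>z. zt (z + l) - zt z) has_field_derivative 0) (at z)" if z: "z \<notin> lattice w1 w2" for z
  proof -
    have z': "z + l \<notin> lattice w1 w2" using z l shift_nonlat by blast
    have "((\<lambda>z. zt (z + l)) has_field_derivative Z2 (z + l)) (at z)"
      using zeta_deriv[OF z'] by (simp add: DERIV_shift)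
    moreover have "Z2 (z + l) = Z2 z" unfolding l_def by (rule Z2_shift[OF e z])
    ultimately show "((\<lambda>z. zt (z + l) - zt z) has_field_derivative 0) (at z)"
      using DERIV_diff[OF _ zeta_deriv[OF z]] by fastforce
  qed
  obtain C where C: "\<And>z. z \<notin> lattice w1 w2 \<Longrightarrow> zt (z + l) - zt z = C"
    using const_on_nonlat[OF D] by blast
  show ?thesis by (rule that[of C]) (use C in \<open>auto simp: l_def algebra_simps\<close>)
qed

definition quasi :: "complex \<Rightarrow> bool" where
  "quasi l \<longleftrightarrow> (\<exists>C a. C \<noteq> 0 \<and> (\<forall>u. sig (u + l) = C * exp (a * u) * sig u))"

lemma quasi_basis:
  assumes e: "e = (1,0) \<or> e = (0,1)"
  shows "quasi (wl w1 w2 e)"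
proof -
  define l where "l = wl w1 w2 e"
  have l: "l \<in> lattice w1 w2" by (auto simp: l_def lattice_wl)
  obtain a where a: "\<And>u. u \<notin> lattice w1 w2 \<Longrightarrow> zt (u + l) = zt u + a"
    using zt_shift_const[OF e] unfolding l_def by blast
  have D: "((\<lambda>z. sig (z + l) * exp (- a * z) / sig z) has_field_derivative 0) (at z)" if z: "z \<notin> lattice w1 w2" for z
  proof -
    have z': "z + l \<notin> lattice w1 w2" using z l shift_nonlat by blast
    have s0: "sig z \<noteq> 0" using z by (simp add: sig_eq_0_iff)
    have s1: "sig (z + l) \<noteq> 0" using z' by (simp add: sig_eq_0_iff)
    have d1: "((\<lambda>z. sig (z + l)) has_field_derivative deriv sig (z + l)) (at z)"
      using sig_deriv[of "z + l" UNIV] by (simp add: DERIV_shift)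
    have d2: "((\<lambda>z. exp (- a * z)) has_field_derivative exp (- a * z) * (- a)) (at z)"
      by (auto intro!: derivative_eq_intros)
    have "((\<lambda>z. sig (z + l) * exp (- a * z) / sig z) has_field_derivative
           ((deriv sig (z + l) * exp (- a * z) + exp (- a * z) * (- a) * sig (z + l)) * sig z
              - sig (z + l) * exp (- a * z) * deriv sig z) / (sig z * sig z)) (at z)"
      by (rule DERIV_divide[OF DERIV_mult[OF d1 d2] sig_deriv s0])
    moreover have "deriv sig (z + l) = (zt z + a) * sig (z + l)"
      using a[OF z] s1 by (simp add: wzeta_def field_simps)
    moreover have "deriv sig z = zt z * sig z" using s0 by (simp add: wzeta_def)
    ultimately show "((\<lambda>z. sig (z + l) * exp (- a * z) / sig z) has_field_derivative 0) (at z)"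
      by (simp add: algebra_simps)
  qed
  obtain C where C: "\<And>z. z \<notin> lattice w1 w2 \<Longrightarrow> sig (z + l) * exp (- a * z) / sig z = C"
    using const_on_nonlat[OF D] by blast
  have eq: "sig (u + l) = C * exp (a * u) * sig u" for u
  proof (cases "u \<in> lattice w1 w2")
    case True
    hence "u + l \<in> lattice w1 w2" using l lat_add by blast
    thus ?thesis using True by (simp add: sig_eq_0_iff[symmetric])
  next
    case False
    have s0: "sig u \<noteq> 0" using False by (simp add: sig_eq_0_iff)
    from C[OF False] s0 have "sig (u + l) * exp (- a * u) = C * sig u" by (simp add: field_simps)
    hence "sig (u + l) * exp (- a * u) * exp (a * u) = C * sig u * exp (a * u)" by simp
    thus ?thesis by (simp add: exp_minus field_simps)
  qed
  have "C \<noteq> 0"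
  proof
    assume C0: "C = 0"
    have h: "l / 2 \<notin> lattice w1 w2" using half_nonlat[OF e] by (simp add: l_def)
    hence "l / 2 + l \<notin> lattice w1 w2" using l shift_nonlat by blast
    hence "sig (l / 2 + l) \<noteq> 0" by (simp add: sig_eq_0_iff)
    with eq[of "l / 2"] C0 show False by simp
  qed
  with eq show ?thesis unfolding quasi_def l_def by blast
qed

lemma quasi_0: "quasi 0"
  unfolding quasi_def by (intro exI[of _ 1] exI[of _ 0]) auto

lemma quasi_add: assumes "quasi l" "quasi m" shows "quasi (l + m)"
proof -
  obtain C a where Ca: "C \<noteq> 0" "\<And>u. sig (u + l) = C * exp (a * u) * sig u" using assms(1) by (auto simp: quasi_def)
  obtain D b where Db: "D \<noteq> 0" "\<And>u. sig (u + m) = D * exp (b * u) * sig u" using assms(2) by (auto simp: quasi_def)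
  have "sig (u + (l + m)) = (C * exp (a * m) * D) * exp ((a + b) * u) * sig u" for u
  proof -
    have "sig (u + (l + m)) = sig ((u + m) + l)" by (simp add: add_ac)
    also have "\<dots> = C * exp (a * (u + m)) * (D * exp (b * u) * sig u)" by (simp add: Ca Db)
    also have "\<dots> = (C * exp (a * m) * D) * exp ((a + b) * u) * sig u"
      by (simp add: exp_add[symmetric] algebra_simps)
    finally show ?thesis .
  qed
  moreover have "C * exp (a * m) * D \<noteq> 0" using Ca Db by simp
  ultimately show ?thesis unfolding quasi_def by blast
qed

lemma quasi_uminus: assumes "quasi l" shows "quasi (- l)"
proof -
  obtain C a where Ca: "C \<noteq> 0" "\<And>u. sig (u + l) = C * exp (a * u) * sig u" using assms by (auto simp: quasi_def)
  have "sig (u + - l) = (inverse C * exp (a * l)) * exp ((- a) * u) * sig u" for u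
  proof -
    have "sig u = C * exp (a * (u - l)) * sig (u - l)" using Ca(2)[of "u - l"] by simp
    hence "sig (u - l) = sig u / (C * exp (a * (u - l)))" using Ca(1) by (simp add: field_simps)
    also have "\<dots> = (inverse C * exp (a * l)) * exp ((- a) * u) * sig u"
      using Ca(1) by (simp add: exp_diff exp_minus right_diff_distrib field_simps)
    finally show ?thesis by simp
  qed
  moreover have "inverse C * exp (a * l) \<noteq> 0" using Ca by simp
  ultimately show ?thesis unfolding quasi_def by blast
qed

lemma quasi_nat_mult: "quasi l \<Longrightarrow> quasi (of_nat n * l)"
  by (induction n) (auto simp: quasi_0 distrib_right intro: quasi_add)

lemma quasi_int_mult: assumes "quasi l" shows "quasi (of_int m * l)"
proof (cases m rule: int_cases)
  case (nonneg n) thus ?thesis using quasi_nat_mult[OF assms, of n] by simp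
next
  case (neg n)
  hence "(of_int m :: complex) = - of_nat (Suc n)" by simp
  hence "of_int m * l = - (of_nat (Suc n) * l)" by (metis minus_mult_left)
  thus ?thesis using quasi_uminus[OF quasi_nat_mult[OF assms, of "Suc n"]] by simp
qed

lemma quasi_lat: assumes "l \<in> lattice w1 w2" shows "quasi l"
proof -
  obtain m k where l: "l = wl w1 w2 (m, k)" using assms by (auto simp: lattice_wl)
  have "l = of_int m * wl w1 w2 (1,0) + of_int k * wl w1 w2 (0,1)" by (simp add: l wl_def)
  thus ?thesis using quasi_add quasi_int_mult quasi_basis by metis
qed

lemma quasi_deriv:
  assumes "\<And>u. sig (u + l) = C * exp (a * u) * sig u"
  shows "deriv sig (u + l) = C * exp (a * u) * (a * sig u + deriv sig u)"
proof -
  have "((\<lambda>u. sig (u + l)) has_field_derivative deriv sig (u + l)) (at u)"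
    using sig_deriv[of "u + l" UNIV] by (simp add: DERIV_shift)
  moreover have "(\<lambda>u. sig (u + l)) = (\<lambda>u. C * exp (a * u) * sig u)" using assms by auto
  ultimately have "((\<lambda>u. C * exp (a * u) * sig u) has_field_derivative deriv sig (u + l)) (at u)" by simp
  moreover have "((\<lambda>u. C * exp (a * u) * sig u) has_field_derivative C * exp (a * u) * (a * sig u + deriv sig u)) (at u)"
    by (auto intro!: derivative_eq_intros simp: algebra_simps)
  ultimately show ?thesis using DERIV_unique by blast
qed

lemma zt_quasi:
  assumes "\<And>u. sig (u + l) = C * exp (a * u) * sig u" "C \<noteq> 0" "u \<notin> lattice w1 w2"
  shows "zt (u + l) = zt u + a"
proof -
  have s0: "sig u \<noteq> 0" using assms(3) by (simp add: sig_eq_0_iff)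
  show ?thesis using quasi_deriv[OF assms(1), of u] assms(1)[of u] s0 assms(2)
    by (simp add: wzeta_def field_simps)
qed

end

context lat
begin

lemma sig_holo_c [holomorphic_intros]: "f holomorphic_on A \<Longrightarrow> (\<lambda>x. sig (f x)) holomorphic_on A"
  using holomorphic_on_compose[of f A sig] sig_holo by (simp add: o_def)

lemma dsig_holo_UNIV: "deriv sig holomorphic_on UNIV"
  by (rule holomorphic_deriv[OF sig_holo_UNIV open_UNIV])

lemma dsig_holo_c [holomorphic_intros]: "f holomorphic_on A \<Longrightarrow> (\<lambda>x. deriv sig (f x)) holomorphic_on A"
  using holomorphic_on_compose[of f A "deriv sig"] holomorphic_on_subset[OF dsig_holo_UNIV] by (simp add: o_def)

lemma dsig_even: "deriv sig (-u) = deriv sig u"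
  using hderiv_sig_uminus[of 1 u] by simp

definition Ak where "Ak \<alpha> \<beta> x = sig (x - \<alpha>) * deriv sig (x - \<beta>) - deriv sig (x - \<alpha>) * sig (x - \<beta>)"
definition Dk where "Dk \<alpha> \<beta> x = sig (x - \<alpha>) * sig (x - \<beta>)"
definition Pk where "Pk \<alpha> \<beta> x = sig x * sig (x - \<alpha> - \<beta>)"
definition Kk where "Kk \<alpha> \<beta> = sig (\<alpha> - \<beta>) / (sig \<alpha> * sig \<beta>)"
definition Fk where "Fk \<alpha> \<beta> x = Ak \<alpha> \<beta> x + (zt \<beta> - zt \<alpha>) * Dk \<alpha> \<beta> x - Kk \<alpha> \<beta> * Pk \<alpha> \<beta> x"

lemma Fk_holo: "Fk \<alpha> \<beta> holomorphic_on A"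
  unfolding Fk_def[abs_def] Ak_def Dk_def Pk_def by (intro holomorphic_intros)

lemma Fk_cont: "continuous_on A (Fk \<alpha> \<beta>)"
  by (intro holomorphic_on_imp_continuous_on Fk_holo)

lemma Dk_cont: "continuous_on A (Dk \<alpha> \<beta>)"
  unfolding Dk_def[abs_def] by (intro holomorphic_on_imp_continuous_on holomorphic_intros)

lemma nonlat_sig: "u \<notin> lattice w1 w2 \<Longrightarrow> sig u \<noteq> 0"
  by (simp add: sig_eq_0_iff)

lemma Fk_alpha:
  assumes "\<alpha> \<notin> lattice w1 w2" "\<beta> \<notin> lattice w1 w2"
  shows "Fk \<alpha> \<beta> \<alpha> = 0"
proof -
  have "sig (\<alpha> - \<alpha> - \<beta>) = - sig \<beta>" using sig_odd[of \<beta>] by simp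
  thus ?thesis using nonlat_sig[OF assms(1)] nonlat_sig[OF assms(2)]
    by (simp add: Fk_def Ak_def Dk_def Pk_def Kk_def deriv_sig_0 field_simps)
qed

lemma Fk_beta:
  assumes "\<alpha> \<notin> lattice w1 w2" "\<beta> \<notin> lattice w1 w2"
  shows "Fk \<alpha> \<beta> \<beta> = 0"
proof -
  have 1: "sig (\<beta> - \<alpha> - \<beta>) = - sig \<alpha>" using sig_odd[of \<alpha>] by simp
  have 2: "sig (\<beta> - \<alpha>) = - sig (\<alpha> - \<beta>)" using sig_odd[of "\<alpha> - \<beta>"] by simp
  show ?thesis using nonlat_sig[OF assms(1)] nonlat_sig[OF assms(2)] 1 2
    by (simp add: Fk_def Ak_def Dk_def Pk_def Kk_def deriv_sig_0 field_simps)
qed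

lemma Fk_0:
  assumes "\<alpha> \<notin> lattice w1 w2" "\<beta> \<notin> lattice w1 w2"
  shows "Fk \<alpha> \<beta> 0 = 0"
proof -
  have s: "sig (0 - \<alpha>) = - sig \<alpha>" "sig (0 - \<beta>) = - sig \<beta>" using sig_odd by simp_all
  have d: "deriv sig (0 - \<alpha>) = deriv sig \<alpha>" "deriv sig (0 - \<beta>) = deriv sig \<beta>" using dsig_even by simp_all
  show ?thesis using nonlat_sig[OF assms(1)] nonlat_sig[OF assms(2)]
    by (simp add: Fk_def Ak_def Dk_def Pk_def Kk_def sig_odd dsig_even wzeta_def field_simps)
qed

lemma Fk_shift:
  assumes l: "l \<in> lattice w1 w2"
  obtains M where "\<And>x. M x \<noteq> 0" "\<And>x. Fk \<alpha> \<beta> (x + l) = M x * Fk \<alpha> \<beta> x" "\<And>x. Dk \<alpha> \<beta> (x + l) = M x * Dk \<alpha> \<beta> x"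
proof -
  obtain C a where C: "C \<noteq> 0" and eq: "\<And>u. sig (u + l) = C * exp (a * u) * sig u"
    using quasi_lat[OF l] by (auto simp: quasi_def)
  define M where "M = (\<lambda>x. C * C * exp (a * (x - \<alpha>)) * exp (a * (x - \<beta>)))"
  have s: "sig (x + l - y) = C * exp (a * (x - y)) * sig (x - y)" for x y
    using eq[of "x - y"] by (simp add: algebra_simps)
  have d: "deriv sig (x + l - y) = C * exp (a * (x - y)) * (a * sig (x - y) + deriv sig (x - y))" for x y
    using quasi_deriv[OF eq, of "x - y"] by (simp add: algebra_simps)
  have A: "Ak \<alpha> \<beta> (x + l) = M x * Ak \<alpha> \<beta> x" for x
    unfolding Ak_def s d by (simp add: M_def algebra_simps)
  have D: "Dk \<alpha> \<beta> (x + l) = M x * Dk \<alpha> \<beta> x" for x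
    unfolding Dk_def s by (simp add: M_def algebra_simps)
  have P: "Pk \<alpha> \<beta> (x + l) = M x * Pk \<alpha> \<beta> x" for x
  proof -
    have "sig (x + l - \<alpha> - \<beta>) = C * exp (a * (x - \<alpha> - \<beta>)) * sig (x - \<alpha> - \<beta>)"
      using eq[of "x - \<alpha> - \<beta>"] by (simp add: algebra_simps)
    moreover have "exp (a * x) * exp (a * (x - \<alpha> - \<beta>)) = exp (a * (x - \<alpha>)) * exp (a * (x - \<beta>))"
      by (simp add: exp_add[symmetric] algebra_simps)
    ultimately show ?thesis unfolding Pk_def eq[of x]
      by (simp add: M_def)
  qed
  show ?thesis
  proof (rule that[of M])
    show "M x \<noteq> 0" for x using C by (simp add: M_def)
    show "Fk \<alpha> \<beta> (x + l) = M x * Fk \<alpha> \<beta> x" for x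
      unfolding Fk_def A D P by (simp add: algebra_simps)
    show "Dk \<alpha> \<beta> (x + l) = M x * Dk \<alpha> \<beta> x" for x by (rule D)
  qed
qed

lemma Fk_degenerate:
  assumes "\<alpha> \<notin> lattice w1 w2" "\<beta> \<notin> lattice w1 w2" "\<alpha> - \<beta> \<in> lattice w1 w2"
  shows "Fk \<alpha> \<beta> x = 0"
proof -
  define l where "l = \<alpha> - \<beta>"
  have l: "l \<in> lattice w1 w2" using assms by (simp add: l_def)
  obtain C a where C: "C \<noteq> 0" and eq: "\<And>u. sig (u + l) = C * exp (a * u) * sig u"
    using quasi_lat[OF l] by (auto simp: quasi_def)
  have za: "zt \<alpha> = zt \<beta> + a" using zt_quasi[OF eq C assms(2)] by (simp add: l_def)
  have s: "sig (x - \<beta>) = C * exp (a * (x - \<alpha>)) * sig (x - \<alpha>)"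
    using eq[of "x - \<alpha>"] by (simp add: l_def)
  have d: "deriv sig (x - \<beta>) = C * exp (a * (x - \<alpha>)) * (a * sig (x - \<alpha>) + deriv sig (x - \<alpha>))"
    using quasi_deriv[OF eq, of "x - \<alpha>"] by (simp add: l_def)
  have "sig (\<alpha> - \<beta>) = 0" using assms(3) by (simp add: sig_eq_0_iff)
  thus ?thesis by (simp add: Fk_def Ak_def Dk_def Kk_def s d za algebra_simps)
qed

end

context lat
begin

lemma div_aux1: fixes a h s b :: complex shows "h \<noteq> 0 \<Longrightarrow> (a / h) / ((s / h) * b) = a / (s * b)"
  by (cases "s * b = 0") (auto simp: field_simps)
lemma div_aux2: fixes a h s b :: complex shows "h \<noteq> 0 \<Longrightarrow> (a / h) / (b * (s / h)) = a / (b * s)"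
  by (cases "s * b = 0") (auto simp: field_simps)

definition Sg where "Sg \<alpha> \<beta> = {x. Dk \<alpha> \<beta> x = 0}"
definition Gk where "Gk \<alpha> \<beta> x = Fk \<alpha> \<beta> x / Dk \<alpha> \<beta> x"

lemma Sg_iff: "x \<in> Sg \<alpha> \<beta> \<longleftrightarrow> x - \<alpha> \<in> lattice w1 w2 \<or> x - \<beta> \<in> lattice w1 w2"
  by (simp add: Sg_def Dk_def sig_eq_0_iff)

lemma ev_shift_nonlat: "eventually (\<lambda>y. y - a \<notin> lattice w1 w2) (at z)"
proof -
  have "eventually (\<lambda>y. y \<notin> lattice w1 w2) (at (z - a))" by (rule ev_nonlat)
  hence "eventually (\<lambda>y. y \<notin> lattice w1 w2) (filtermap (\<lambda>x. x - a) (at z))"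
    by (simp add: filtermap_at_shift)
  thus ?thesis by (simp add: eventually_filtermap)
qed

lemma ev_nonSg: "eventually (\<lambda>y. y \<notin> Sg \<alpha> \<beta>) (at z)"
  using eventually_conj[OF ev_shift_nonlat[of \<alpha> z] ev_shift_nonlat[of \<beta> z]]
  by (rule eventually_mono) (simp add: Sg_iff)

lemma Sg_closed: "closed (Sg \<alpha> \<beta>)"
  unfolding Sg_def by (rule closed_Collect_eq) (auto intro: Dk_cont)

lemma Gk_holo: "Gk \<alpha> \<beta> holomorphic_on (- Sg \<alpha> \<beta>)"
  unfolding Gk_def[abs_def] Dk_def[abs_def] Sg_def
  by (intro holomorphic_intros Fk_holo) (auto simp: Dk_def)

lemma Gk_periodic: assumes "l \<in> lattice w1 w2" shows "Gk \<alpha> \<beta> (x + l) = Gk \<alpha> \<beta> x"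
proof -
  obtain M where M: "\<And>x. M x \<noteq> 0" "\<And>x. Fk \<alpha> \<beta> (x + l) = M x * Fk \<alpha> \<beta> x" "\<And>x. Dk \<alpha> \<beta> (x + l) = M x * Dk \<alpha> \<beta> x"
    using Fk_shift[OF assms] by blast
  show ?thesis unfolding Gk_def M(2,3) using M(1)[of x] by simp
qed

lemma Gk_lim_alpha:
  assumes "\<alpha> \<notin> lattice w1 w2" "\<beta> \<notin> lattice w1 w2" "\<alpha> - \<beta> \<notin> lattice w1 w2"
  shows "\<exists>L. Gk \<alpha> \<beta> \<midarrow>\<alpha>\<rightarrow> L"
proof -
  have F0: "Fk \<alpha> \<beta> \<alpha> = 0" by (rule Fk_alpha[OF assms(1,2)])
  have "(Fk \<alpha> \<beta> has_field_derivative deriv (Fk \<alpha> \<beta>) \<alpha>) (at \<alpha>)"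
    using Fk_holo[of \<alpha> \<beta> UNIV] holomorphic_derivI by blast
  hence hF: "((\<lambda>y. (Fk \<alpha> \<beta> y - Fk \<alpha> \<beta> \<alpha>) / (y - \<alpha>)) \<longlongrightarrow> deriv (Fk \<alpha> \<beta>) \<alpha>) (at \<alpha>)"
    by (simp add: has_field_derivative_iff)
  have "(sig has_field_derivative deriv sig 0) (at (\<alpha> + - \<alpha>))" using sig_deriv[of 0 UNIV] by simp
  hence "((\<lambda>y. sig (y + - \<alpha>)) has_field_derivative deriv sig 0) (at \<alpha>)" by (simp only: DERIV_shift)
  hence hS: "((\<lambda>y. (sig (y - \<alpha>) - sig (\<alpha> - \<alpha>)) / (y - \<alpha>)) \<longlongrightarrow> deriv sig 0) (at \<alpha>)"
    by (simp add: has_field_derivative_iff)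
  have hB: "((\<lambda>y. sig (y - \<beta>)) \<longlongrightarrow> sig (\<alpha> - \<beta>)) (at \<alpha>)"
    by (intro tendsto_intros isCont_tendsto_compose[OF sig_isCont])
  have nz: "deriv sig 0 * sig (\<alpha> - \<beta>) \<noteq> 0" using assms(3) by (simp add: deriv_sig_0 sig_eq_0_iff)
  have "((\<lambda>y. ((Fk \<alpha> \<beta> y - Fk \<alpha> \<beta> \<alpha>) / (y - \<alpha>)) / (((sig (y - \<alpha>) - sig (\<alpha> - \<alpha>)) / (y - \<alpha>)) * sig (y - \<beta>)))
          \<longlongrightarrow> deriv (Fk \<alpha> \<beta>) \<alpha> / (deriv sig 0 * sig (\<alpha> - \<beta>))) (at \<alpha>)"
    by (intro tendsto_divide tendsto_mult hF hS hB nz)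
  moreover have "eventually (\<lambda>y. ((Fk \<alpha> \<beta> y - Fk \<alpha> \<beta> \<alpha>) / (y - \<alpha>)) / (((sig (y - \<alpha>) - sig (\<alpha> - \<alpha>)) / (y - \<alpha>)) * sig (y - \<beta>))
          = Gk \<alpha> \<beta> y) (at \<alpha>)"
    unfolding eventually_at_filter
    by (intro always_eventually allI impI) (simp add: F0 Gk_def Dk_def div_aux1 div_aux2)
  ultimately show ?thesis using Lim_transform_eventually by blast
qed

lemma Gk_lim_beta:
  assumes "\<alpha> \<notin> lattice w1 w2" "\<beta> \<notin> lattice w1 w2" "\<alpha> - \<beta> \<notin> lattice w1 w2"
  shows "\<exists>L. Gk \<alpha> \<beta> \<midarrow>\<beta>\<rightarrow> L"
proof -
  have F0: "Fk \<alpha> \<beta> \<beta> = 0" by (rule Fk_beta[OF assms(1,2)])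
  have "(Fk \<alpha> \<beta> has_field_derivative deriv (Fk \<alpha> \<beta>) \<beta>) (at \<beta>)"
    using Fk_holo[of \<alpha> \<beta> UNIV] holomorphic_derivI by blast
  hence hF: "((\<lambda>y. (Fk \<alpha> \<beta> y - Fk \<alpha> \<beta> \<beta>) / (y - \<beta>)) \<longlongrightarrow> deriv (Fk \<alpha> \<beta>) \<beta>) (at \<beta>)"
    by (simp add: has_field_derivative_iff)
  have "(sig has_field_derivative deriv sig 0) (at (\<beta> + - \<beta>))" using sig_deriv[of 0 UNIV] by simp
  hence "((\<lambda>y. sig (y + - \<beta>)) has_field_derivative deriv sig 0) (at \<beta>)" by (simp only: DERIV_shift)
  hence hS: "((\<lambda>y. (sig (y - \<beta>) - sig (\<beta> - \<beta>)) / (y - \<beta>)) \<longlongrightarrow> deriv sig 0) (at \<beta>)"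
    by (simp add: has_field_derivative_iff)
  have hB: "((\<lambda>y. sig (y - \<alpha>)) \<longlongrightarrow> sig (\<beta> - \<alpha>)) (at \<beta>)"
    by (intro tendsto_intros isCont_tendsto_compose[OF sig_isCont])
  have "\<beta> - \<alpha> \<notin> lattice w1 w2" using assms(3) lat_minus by fastforce
  hence nz: "sig (\<beta> - \<alpha>) * deriv sig 0 \<noteq> 0" by (simp add: deriv_sig_0 sig_eq_0_iff)
  have "((\<lambda>y. ((Fk \<alpha> \<beta> y - Fk \<alpha> \<beta> \<beta>) / (y - \<beta>)) / (sig (y - \<alpha>) * ((sig (y - \<beta>) - sig (\<beta> - \<beta>)) / (y - \<beta>))))
          \<longlongrightarrow> deriv (Fk \<alpha> \<beta>) \<beta> / (sig (\<beta> - \<alpha>) * deriv sig 0)) (at \<beta>)"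
    by (intro tendsto_divide tendsto_mult hF hS hB nz)
  moreover have "eventually (\<lambda>y. ((Fk \<alpha> \<beta> y - Fk \<alpha> \<beta> \<beta>) / (y - \<beta>)) / (sig (y - \<alpha>) * ((sig (y - \<beta>) - sig (\<beta> - \<beta>)) / (y - \<beta>)))
          = Gk \<alpha> \<beta> y) (at \<beta>)"
    unfolding eventually_at_filter
    by (intro always_eventually allI impI) (simp add: F0 Gk_def Dk_def div_aux1 div_aux2)
  ultimately show ?thesis using Lim_transform_eventually by blast
qed

lemma Gk_lim_periodic:
  assumes "Gk \<alpha> \<beta> \<midarrow>z\<rightarrow> L" "l \<in> lattice w1 w2"
  shows "Gk \<alpha> \<beta> \<midarrow>(z + l)\<rightarrow> L"
proof -
  have "(\<lambda>x. Gk \<alpha> \<beta> (x + - l)) \<midarrow>(z - - l)\<rightarrow> L" by (rule LIM_offset[OF assms(1)])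
  moreover have "(\<lambda>x. Gk \<alpha> \<beta> (x + - l)) = Gk \<alpha> \<beta>"
    by (rule ext, rule Gk_periodic[OF lat_minus[OF assms(2)]])
  ultimately show ?thesis by simp
qed

lemma Gk_lim_all:
  assumes "\<alpha> \<notin> lattice w1 w2" "\<beta> \<notin> lattice w1 w2" "\<alpha> - \<beta> \<notin> lattice w1 w2"
  shows "\<exists>L. Gk \<alpha> \<beta> \<midarrow>z\<rightarrow> L"
proof (cases "z \<in> Sg \<alpha> \<beta>")
  case False
  have "isCont (Gk \<alpha> \<beta>) z"
    using Gk_holo[of \<alpha> \<beta>] False Sg_closed[of \<alpha> \<beta>]
    by (meson ComplI holomorphic_on_imp_continuous_on continuous_on_eq_continuous_at open_Compl)
  thus ?thesis by (auto simp: isCont_def)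
next
  case True
  then consider "z - \<alpha> \<in> lattice w1 w2" | "z - \<beta> \<in> lattice w1 w2" by (auto simp: Sg_iff)
  thus ?thesis
  proof cases
    case 1
    obtain L where "Gk \<alpha> \<beta> \<midarrow>\<alpha>\<rightarrow> L" using Gk_lim_alpha[OF assms] by blast
    from Gk_lim_periodic[OF this 1] show ?thesis by auto
  next
    case 2
    obtain L where "Gk \<alpha> \<beta> \<midarrow>\<beta>\<rightarrow> L" using Gk_lim_beta[OF assms] by blast
    from Gk_lim_periodic[OF this 2] show ?thesis by auto
  qed
qed

end

context lat
begin

lemma iso_Gk: "isolated_singularity_at (Gk \<alpha> \<beta>) z"
proof -
  obtain d where d: "d > 0" "\<And>y. y \<noteq> z \<Longrightarrow> dist y z < d \<Longrightarrow> y \<notin> Sg \<alpha> \<beta>"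
    using ev_nonSg[of \<alpha> \<beta> z] unfolding eventually_at by auto
  have "ball z d - {z} \<subseteq> - Sg \<alpha> \<beta>" using d by (auto simp: dist_commute)
  hence "Gk \<alpha> \<beta> holomorphic_on ball z d - {z}" using Gk_holo holomorphic_on_subset by blast
  hence "Gk \<alpha> \<beta> analytic_on ball z d - {z}" by (subst analytic_on_open) auto
  thus ?thesis unfolding isolated_singularity_at_def using d by blast
qed

lemma Gk_isCont: "z \<notin> Sg \<alpha> \<beta> \<Longrightarrow> isCont (Gk \<alpha> \<beta>) z"
  using Gk_holo[of \<alpha> \<beta>] Sg_closed[of \<alpha> \<beta>]
  by (meson ComplI holomorphic_on_imp_continuous_on continuous_on_eq_continuous_at open_Compl)

definition gk where "gk \<alpha> \<beta> = remove_sings (Gk \<alpha> \<beta>)"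

lemma l1_nz: "wl w1 w2 (1,0) \<noteq> 0" by (simp add: wl_eq_0_iff)

lemma parallelogram:
  obtains s t :: real where "z = of_real s * wl w1 w2 (1,0) + of_real t * wl w1 w2 (0,1)"
proof -
  define l1 where "l1 = wl w1 w2 (1,0)"
  define l2 where "l2 = wl w1 w2 (0,1)"
  define \<tau> where "\<tau> = l2 / l1"
  have l1: "l1 \<noteq> 0" by (simp add: l1_def wl_eq_0_iff)
  have \<tau>: "\<tau> = w2 / w1" using w1_nz by (simp add: \<tau>_def l1_def l2_def wl_def)
  have Im\<tau>: "Im \<tau> \<noteq> 0" using tau \<tau> by simp
  define t where "t = Im (z / l1) / Im \<tau>"
  define s where "s = Re (z / l1) - t * Re \<tau>"
  have "z / l1 = of_real s + of_real t * \<tau>"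
    using Im\<tau> by (intro complex_eqI) (simp_all add: s_def t_def)
  hence "z = l1 * (of_real s + of_real t * \<tau>)" using l1 by (simp add: field_simps)
  also have "\<dots> = of_real s * l1 + of_real t * l2" using l1 by (simp add: \<tau>_def field_simps)
  finally have "z = of_real s * wl w1 w2 (1,0) + of_real t * wl w1 w2 (0,1)" by (simp only: l1_def l2_def)
  thus ?thesis by (rule that)
qed

context
  fixes \<alpha> \<beta>
  assumes ab: "\<alpha> \<notin> lattice w1 w2" "\<beta> \<notin> lattice w1 w2" "\<alpha> - \<beta> \<notin> lattice w1 w2"
begin

lemma gk_lim: "Gk \<alpha> \<beta> \<midarrow>z\<rightarrow> gk \<alpha> \<beta> z"
proof -
  obtain L where L: "Gk \<alpha> \<beta> \<midarrow>z\<rightarrow> L" using Gk_lim_all[OF ab] by blast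
  hence "gk \<alpha> \<beta> z = L" unfolding gk_def by (rule remove_sings_eqI)
  with L show ?thesis by simp
qed

lemma gk_analytic_at: "gk \<alpha> \<beta> analytic_on {z}"
proof -
  obtain L where L: "Gk \<alpha> \<beta> \<midarrow>z\<rightarrow> L" using Gk_lim_all[OF ab] by blast
  show ?thesis unfolding gk_def by (rule remove_sings_analytic_at[OF iso_Gk L])
qed

lemma gk_analytic: "gk \<alpha> \<beta> analytic_on A"
  by (rule analytic_on_analytic_at[THEN iffD2]) (intro ballI gk_analytic_at)

lemma gk_holo: "gk \<alpha> \<beta> holomorphic_on UNIV"
  by (rule analytic_imp_holomorphic[OF gk_analytic])

lemma gk_periodic: assumes "l \<in> lattice w1 w2" shows "gk \<alpha> \<beta> (z + l) = gk \<alpha> \<beta> z"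
proof -
  have "Gk \<alpha> \<beta> \<midarrow>(z + l)\<rightarrow> gk \<alpha> \<beta> z" by (rule Gk_lim_periodic[OF gk_lim assms])
  thus ?thesis unfolding gk_def by (rule remove_sings_eqI)
qed

lemma gk_bounded: "bounded (range (gk \<alpha> \<beta>))"
proof -
  define P where "P = (\<lambda>(s,t). complex_of_real s * wl w1 w2 (1,0) + complex_of_real t * wl w1 w2 (0,1)) ` ({0..1::real} \<times> {0..1::real})"
  have "compact P" unfolding P_def
    by (intro compact_continuous_image compact_Times compact_Icc)
       (auto intro!: continuous_intros simp: case_prod_unfold)
  hence "compact (gk \<alpha> \<beta> ` P)"
    by (intro compact_continuous_image holomorphic_on_imp_continuous_on holomorphic_on_subset[OF gk_holo]) auto
  hence bP: "bounded (gk \<alpha> \<beta> ` P)" by (rule compact_imp_bounded)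
  have "range (gk \<alpha> \<beta>) \<subseteq> gk \<alpha> \<beta> ` P"
  proof
    fix y assume "y \<in> range (gk \<alpha> \<beta>)"
    then obtain z where y: "y = gk \<alpha> \<beta> z" by auto
    obtain s t :: real where z: "z = of_real s * wl w1 w2 (1,0) + of_real t * wl w1 w2 (0,1)"
      by (rule parallelogram)
    define z' where "z' = of_real (s - of_int \<lfloor>s\<rfloor>) * wl w1 w2 (1,0) + of_real (t - of_int \<lfloor>t\<rfloor>) * wl w1 w2 (0,1)"
    have fs: "s - of_int \<lfloor>s\<rfloor> \<in> {0..1}" using frac_lt_1[of s] frac_ge_0[of s] by (simp add: frac_def)
    have ft: "t - of_int \<lfloor>t\<rfloor> \<in> {0..1}" using frac_lt_1[of t] frac_ge_0[of t] by (simp add: frac_def)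
    have "z' \<in> P" unfolding P_def z'_def
      by (rule image_eqI[of _ _ "(s - of_int \<lfloor>s\<rfloor>, t - of_int \<lfloor>t\<rfloor>)"]) (use fs ft in auto)
    have e: "wl w1 w2 (\<lfloor>s\<rfloor>, \<lfloor>t\<rfloor>) = of_real (of_int \<lfloor>s\<rfloor>) * wl w1 w2 (1,0) + of_real (of_int \<lfloor>t\<rfloor>) * wl w1 w2 (0,1)"
      by (simp add: wl_def)
    have zz: "z = z' + wl w1 w2 (\<lfloor>s\<rfloor>, \<lfloor>t\<rfloor>)"
      unfolding e z z'_def of_real_diff by (simp add: algebra_simps)
    have "wl w1 w2 (\<lfloor>s\<rfloor>, \<lfloor>t\<rfloor>) \<in> lattice w1 w2" by (simp add: lattice_wl)
    from gk_periodic[OF this, of z'] have "gk \<alpha> \<beta> z = gk \<alpha> \<beta> z'" by (simp only: zz)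
    with y \<open>z' \<in> P\<close> show "y \<in> gk \<alpha> \<beta> ` P" by auto
  qed
  thus ?thesis using bP bounded_subset by blast
qed

lemma gk_0: "gk \<alpha> \<beta> z = 0"
proof -
  have "gk \<alpha> \<beta> constant_on UNIV" by (rule Liouville_theorem[OF gk_holo gk_bounded])
  hence 1: "gk \<alpha> \<beta> z = gk \<alpha> \<beta> 0" by (auto simp: constant_on_def)
  have "- \<alpha> \<notin> lattice w1 w2" "- \<beta> \<notin> lattice w1 w2"
    using ab lat_minus[of "- \<alpha>"] lat_minus[of "- \<beta>"] by auto
  hence "0 \<notin> Sg \<alpha> \<beta>" by (simp add: Sg_iff)
  hence "Gk \<alpha> \<beta> \<midarrow>0\<rightarrow> Gk \<alpha> \<beta> 0" using Gk_isCont isCont_def by blast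
  hence 2: "gk \<alpha> \<beta> 0 = Gk \<alpha> \<beta> 0" unfolding gk_def by (rule remove_sings_eqI)
  have 3: "Gk \<alpha> \<beta> 0 = 0" by (simp add: Gk_def Fk_0[OF ab(1,2)])
  show ?thesis using 1 2 3 by simp
qed

lemma Fk_zero_nonSg: "x \<notin> Sg \<alpha> \<beta> \<Longrightarrow> Fk \<alpha> \<beta> x = 0"
proof -
  assume x: "x \<notin> Sg \<alpha> \<beta>"
  hence "Gk \<alpha> \<beta> \<midarrow>x\<rightarrow> Gk \<alpha> \<beta> x" using Gk_isCont isCont_def by blast
  hence "gk \<alpha> \<beta> x = Gk \<alpha> \<beta> x" unfolding gk_def by (rule remove_sings_eqI)
  hence "Gk \<alpha> \<beta> x = 0" using gk_0 by simp
  moreover have "Dk \<alpha> \<beta> x \<noteq> 0" using x by (simp add: Sg_def)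
  ultimately show ?thesis by (simp add: Gk_def)
qed

lemma Fk_zero_nondeg: "Fk \<alpha> \<beta> x = 0"
proof -
  have "Fk \<alpha> \<beta> \<midarrow>x\<rightarrow> Fk \<alpha> \<beta> x"
    using Fk_cont[of UNIV \<alpha> \<beta>] by (simp add: continuous_on_eq_continuous_at isCont_def)
  moreover have "Fk \<alpha> \<beta> \<midarrow>x\<rightarrow> 0"
  proof (rule Lim_transform_eventually[OF tendsto_const])
    show "eventually (\<lambda>y. 0 = Fk \<alpha> \<beta> y) (at x)"
      using ev_nonSg[of \<alpha> \<beta> x] by eventually_elim (simp add: Fk_zero_nonSg)
  qed
  ultimately show ?thesis by (rule tendsto_unique[OF at_neq_bot])
qed

end

theorem key_identity:
  assumes "\<alpha> \<notin> lattice w1 w2" "\<beta> \<notin> lattice w1 w2"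
  shows "sig (x - \<alpha>) * deriv sig (x - \<beta>) - deriv sig (x - \<alpha>) * sig (x - \<beta>)
           + (zt \<beta> - zt \<alpha>) * (sig (x - \<alpha>) * sig (x - \<beta>))
         = sig (\<alpha> - \<beta>) / (sig \<alpha> * sig \<beta>) * (sig x * sig (x - \<alpha> - \<beta>))"
proof -
  have "Fk \<alpha> \<beta> x = 0"
  proof (cases "\<alpha> - \<beta> \<in> lattice w1 w2")
    case True thus ?thesis by (rule Fk_degenerate[OF assms])
  next
    case False thus ?thesis by (rule Fk_zero_nondeg[OF assms])
  qed
  thus ?thesis by (simp add: Fk_def Ak_def Dk_def Pk_def Kk_def)
qed

end

definition Wr :: "nat \<Rightarrow> (nat \<Rightarrow> complex \<Rightarrow> complex) \<Rightarrow> complex \<Rightarrow> complex" where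
  "Wr n f x = Determinant.det (Matrix.mat n n (\<lambda>(i,j). (deriv ^^ i) (f j) x))"

lemma prod_list_map_upt: "prod_list (map f [0..<n]) = (\<Prod>i<n. f i)"
  by (induction n) (auto simp: lessThan_Suc mult.commute)

lemma Wr_cong:
  assumes "open S" "x \<in> S" "\<And>j y. j < n \<Longrightarrow> y \<in> S \<Longrightarrow> f j y = g j y"
  shows "Wr n f x = Wr n g x"
proof -
  have "(deriv ^^ i) (f j) x = (deriv ^^ i) (g j) x" if "j < n" for i j
  proof (rule higher_deriv_cong_ev)
    show "eventually (\<lambda>y. f j y = g j y) (nhds x)"
      using eventually_nhds_in_open[OF assms(1,2)] by eventually_elim (use assms(3) that in auto)
  qed auto
  hence "Matrix.mat n n (\<lambda>(i,j). (deriv ^^ i) (f j) x) = Matrix.mat n n (\<lambda>(i,j). (deriv ^^ i) (g j) x)"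
    by (intro eq_matI) auto
  thus ?thesis by (simp add: Wr_def)
qed

lemma Wr_mult:
  assumes S: "open S" "x \<in> S" and f: "\<And>j. j < n \<Longrightarrow> f j holomorphic_on S" and h: "h holomorphic_on S"
  shows "Wr n (\<lambda>j y. f j y * h y) x = h x ^ n * Wr n f x"
proof -
  define H where "H = Matrix.mat n n (\<lambda>(k,j). (deriv ^^ k) (f j) x)"
  define L where "L = Matrix.mat n n (\<lambda>(i,k). if k \<le> i then of_nat (i choose k) * (deriv ^^ (i - k)) h x else 0)"
  have HL: "H \<in> carrier_mat n n" "L \<in> carrier_mat n n" by (auto simp: H_def L_def)
  have eq: "Matrix.mat n n (\<lambda>(i,j). (deriv ^^ i) (\<lambda>y. f j y * h y) x) = L * H"
  proof (rule eq_matI)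
    fix i j assume ij: "i < dim_row (L * H)" "j < dim_col (L * H)"
    hence i: "i < n" and j: "j < n" by (auto simp: L_def H_def)
    have "(L * H) $$ (i, j) = (\<Sum>k\<in>{0..<n}. L $$ (i, k) * H $$ (k, j))"
      using i j by (simp add: L_def H_def scalar_prod_def)
    also have "\<dots> = (\<Sum>k\<in>{0..<n}. if k \<in> {k. k \<le> i} then of_nat (i choose k) * (deriv ^^ k) (f j) x * (deriv ^^ (i - k)) h x else 0)"
      using i j by (intro sum.cong refl) (auto simp: L_def H_def)
    also have "\<dots> = (\<Sum>k\<in>{0..<n} \<inter> {k. k \<le> i}. of_nat (i choose k) * (deriv ^^ k) (f j) x * (deriv ^^ (i - k)) h x)"
      by (rule sum.inter_restrict[symmetric]) auto
    also have "{0..<n} \<inter> {k. k \<le> i} = {0..i}" using i by auto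
    also have "(\<Sum>k=0..i. of_nat (i choose k) * (deriv ^^ k) (f j) x * (deriv ^^ (i - k)) h x) = (deriv ^^ i) (\<lambda>y. f j y * h y) x"
      by (rule higher_deriv_mult[OF f[OF j] h S, symmetric])
    finally show "Matrix.mat n n (\<lambda>(i,j). (deriv ^^ i) (\<lambda>y. f j y * h y) x) $$ (i, j) = (L * H) $$ (i, j)"
      using i j by simp
  qed (auto simp: L_def H_def)
  have "Determinant.det L = prod_list (diag_mat L)"
    by (rule det_lower_triangular[of n]) (auto simp: L_def)
  also have "\<dots> = h x ^ n"
  proof -
    have "diag_mat L = map (\<lambda>i. h x) [0..<n]" by (auto simp: diag_mat_def L_def)
    thus ?thesis by (simp add: prod_list_map_upt)
  qed
  finally have dL: "Determinant.det L = h x ^ n" .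
  show ?thesis unfolding Wr_def eq det_mult[OF HL(2) HL(1)] dL by (simp add: H_def)
qed

lemma Wr_scale:
  assumes S: "open S" "x \<in> S" and f: "\<And>j. j < n \<Longrightarrow> f j holomorphic_on S"
  shows "Wr n (\<lambda>j y. k j * f j y) x = (\<Prod>j<n. k j) * Wr n f x"
proof -
  define H where "H = Matrix.mat n n (\<lambda>(i,j). (deriv ^^ i) (f j) x)"
  define D where "D = Matrix.mat n n (\<lambda>(i,j). if i = j then k j else 0)"
  have HD: "H \<in> carrier_mat n n" "D \<in> carrier_mat n n" by (auto simp: H_def D_def)
  have eq: "Matrix.mat n n (\<lambda>(i,j). (deriv ^^ i) (\<lambda>y. k j * f j y) x) = H * D"
  proof (rule eq_matI)
    fix i j assume ij: "i < dim_row (H * D)" "j < dim_col (H * D)"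
    hence i: "i < n" and j: "j < n" by (auto simp: D_def H_def)
    have "(H * D) $$ (i, j) = (\<Sum>l\<in>{0..<n}. H $$ (i, l) * D $$ (l, j))"
      using i j by (simp add: D_def H_def scalar_prod_def)
    also have "\<dots> = (\<Sum>l\<in>{0..<n}. if l = j then (deriv ^^ i) (f j) x * k j else 0)"
      using i j by (intro sum.cong refl) (auto simp: D_def H_def)
    also have "\<dots> = (deriv ^^ i) (f j) x * k j" using j by simp
    also have "\<dots> = (deriv ^^ i) (\<lambda>y. k j * f j y) x"
      using higher_deriv_cmult[OF f[OF j] S(2,1), of i "k j"] by simp
    finally show "Matrix.mat n n (\<lambda>(i,j). (deriv ^^ i) (\<lambda>y. k j * f j y) x) $$ (i, j) = (H * D) $$ (i, j)"
      using i j by simp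
  qed (auto simp: D_def H_def)
  have "Determinant.det D = prod_list (diag_mat D)"
    by (rule det_lower_triangular[of n]) (auto simp: D_def)
  also have "diag_mat D = map k [0..<n]" by (auto simp: diag_mat_def D_def)
  finally have dD: "Determinant.det D = (\<Prod>j<n. k j)" by (simp add: prod_list_map_upt)
  show ?thesis unfolding Wr_def eq det_mult[OF HD] dD by (simp add: H_def)
qed

lemma Wr_first:
  assumes S: "open S" "x \<in> S" and f0: "\<And>y. y \<in> S \<Longrightarrow> f 0 y = 1"
  shows "Wr (Suc n) f x = Wr n (\<lambda>j. deriv (f (Suc j))) x"
proof -
  define A where "A = Matrix.mat (Suc n) (Suc n) (\<lambda>(i,j). (deriv ^^ i) (f j) x)"
  have A: "A \<in> carrier_mat (Suc n) (Suc n)" by (simp add: A_def)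
  have c0: "(deriv ^^ i) (f 0) x = (if i = 0 then 1 else 0)" for i
  proof -
    have "(deriv ^^ i) (f 0) x = (deriv ^^ i) (\<lambda>_. 1) x"
    proof (rule higher_deriv_cong_ev)
      show "eventually (\<lambda>y. f 0 y = 1) (nhds x)"
        using eventually_nhds_in_open[OF S] by eventually_elim (use f0 in auto)
    qed auto
    thus ?thesis by simp
  qed
  have "Determinant.det A = (\<Sum>i<Suc n. A $$ (i, 0) * cofactor A i 0)"
    by (rule laplace_expansion_column[OF A]) simp
  also have "\<dots> = (\<Sum>i<Suc n. if i = 0 then cofactor A 0 0 else 0)"
    by (intro sum.cong refl) (auto simp: A_def c0)
  also have "\<dots> = cofactor A 0 0" by simp
  also have "\<dots> = Determinant.det (mat_delete A 0 0)" by (simp add: cofactor_def)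
  also have "mat_delete A 0 0 = Matrix.mat n n (\<lambda>(i,j). (deriv ^^ i) (deriv (f (Suc j))) x)"
    by (rule eq_matI) (auto simp: mat_delete_def A_def funpow_Suc_right simp del: funpow.simps)
  finally show ?thesis by (simp add: Wr_def A_def)
qed

lemma Wr_shift:
  assumes f: "\<And>j. j < n \<Longrightarrow> f j holomorphic_on T" and T: "open T" "x - a \<in> T"
  shows "Wr n (\<lambda>j y. f j (y - a)) x = Wr n f (x - a)"
proof -
  define S where "S = (\<lambda>t. a + t) ` T"
  have S: "open S" "x \<in> S" using T open_translation[OF T(1), of a] by (auto simp: S_def image_iff intro: bexI[of _ "x - a"])
  have "(deriv ^^ i) (\<lambda>y. f j (y - a)) x = (deriv ^^ i) (f j) (x - a)" if j: "j < n" for i j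
  proof -
    have "(deriv ^^ i) (\<lambda>w. f j (1 * w + (- a))) x = 1 ^ i * (deriv ^^ i) (f j) (1 * x + (- a))"
      by (rule higher_deriv_compose_linear'[OF f[OF j] S(1) T(1) S(2)]) (auto simp: S_def)
    thus ?thesis by simp
  qed
  hence "Matrix.mat n n (\<lambda>(i,j). (deriv ^^ i) (\<lambda>y. f j (y - a)) x) = Matrix.mat n n (\<lambda>(i,j). (deriv ^^ i) (f j) (x - a))"
    by (intro eq_matI) auto
  thus ?thesis by (simp add: Wr_def)
qed

context lat
begin

lemma sig_shift_deriv: "((\<lambda>y. sig (y - b)) has_field_derivative deriv sig (y - b)) (at y)"
proof -
  have "(sig has_field_derivative deriv sig (y - b)) (at (y + - b))" using sig_deriv[of "y - b" UNIV] by simp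
  hence "((\<lambda>y. sig (y + - b)) has_field_derivative deriv sig (y - b)) (at y)" by (simp only: DERIV_shift)
  thus ?thesis by simp
qed

lemma r_deriv:
  assumes a: "a \<notin> lattice w1 w2" and b: "b \<notin> lattice w1 w2"
      and y: "y \<notin> lattice w1 w2" "y - a \<notin> lattice w1 w2"
  shows "((\<lambda>y. Phi w1 w2 y b / Phi w1 w2 y a) has_field_derivative
           (sig (a - b) * exp (a * zt b) / (sig a * sig b)) * Phi w1 w2 (y - a) b * (1 / Phi w1 w2 y a)) (at y)"
proof -
  define V where "V = - lattice w1 w2 \<inter> {y. y - a \<notin> lattice w1 w2}"
  have Vo: "open V"
  proof -
    have "open ((\<lambda>y. y - a) -` (- lattice w1 w2))"
      by (rule continuous_open_vimage[OF open_nonlat]) (intro continuous_intros)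
    thus ?thesis unfolding V_def using open_nonlat by (simp add: vimage_def Collect_neg_eq open_Int)
  qed
  have yV: "y \<in> V" using y by (simp add: V_def)
  define c where "c = sig a / sig b"
  define d where "d = zt b - zt a"
  define R where "R = (\<lambda>y. c * (sig (y - b) / sig (y - a)) * exp (y * d))"
  have sa: "sig a \<noteq> 0" and sb: "sig b \<noteq> 0" using a b by (simp_all add: sig_eq_0_iff)
  have eqR: "Phi w1 w2 v b / Phi w1 w2 v a = R v" if v: "v \<in> V" for v
  proof -
    have "sig v \<noteq> 0" "sig (v - a) \<noteq> 0" using v by (simp_all add: V_def sig_eq_0_iff)
    thus ?thesis using sa sb
      by (simp add: Phi_def R_def c_def d_def exp_diff field_simps)
  qed
  have S1: "sig (y - a) \<noteq> 0" and Y: "sig y \<noteq> 0" using y by (simp_all add: sig_eq_0_iff)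
  have dexp: "((\<lambda>y. exp (y * d)) has_field_derivative exp (y * d) * d) (at y)"
    by (auto intro!: derivative_eq_intros)
  have dR: "(R has_field_derivative
      c * ((deriv sig (y - b) * sig (y - a) - sig (y - b) * deriv sig (y - a)) / (sig (y - a) * sig (y - a))) * exp (y * d)
      + exp (y * d) * d * (c * (sig (y - b) / sig (y - a)))) (at y)"
    unfolding R_def
    by (rule DERIV_mult[OF DERIV_cmult[OF DERIV_divide[OF sig_shift_deriv sig_shift_deriv S1]] dexp])
  have key: "sig (y - a) * deriv sig (y - b) - deriv sig (y - a) * sig (y - b) + d * (sig (y - a) * sig (y - b))
      = sig (a - b) / (sig a * sig b) * (sig y * sig (y - a - b))"
    unfolding d_def by (rule key_identity[OF a b])
  have ex: "exp (y * d) = exp (a * zt b) * exp ((y - a) * zt b) / exp (y * zt a)"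
    by (simp add: d_def exp_add[symmetric] exp_diff[symmetric] algebra_simps)
  have "c * ((deriv sig (y - b) * sig (y - a) - sig (y - b) * deriv sig (y - a)) / (sig (y - a) * sig (y - a))) * exp (y * d)
      + exp (y * d) * d * (c * (sig (y - b) / sig (y - a)))
      = c * exp (y * d) / (sig (y - a) * sig (y - a)) *
        (sig (y - a) * deriv sig (y - b) - deriv sig (y - a) * sig (y - b) + d * (sig (y - a) * sig (y - b)))"
    using S1 by (simp add: field_simps)
  also have "\<dots> = c * exp (y * d) / (sig (y - a) * sig (y - a)) * (sig (a - b) / (sig a * sig b) * (sig y * sig (y - a - b)))"
    by (simp only: key)
  also have "\<dots> = (sig (a - b) * exp (a * zt b) / (sig a * sig b)) * Phi w1 w2 (y - a) b * (1 / Phi w1 w2 y a)"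
    unfolding ex Phi_def c_def using sa sb S1 Y by (simp add: field_simps)
  finally have dR': "(R has_field_derivative (sig (a - b) * exp (a * zt b) / (sig a * sig b)) * Phi w1 w2 (y - a) b * (1 / Phi w1 w2 y a)) (at y)"
    using dR by simp
  show ?thesis
    by (rule has_field_derivative_transform_within_open[OF dR' Vo yV]) (simp add: eqR)
qed

definition LHS :: "nat \<Rightarrow> (nat \<Rightarrow> complex) \<Rightarrow> complex \<Rightarrow> complex" where
  "LHS n \<alpha> x = sig (x - (\<Sum>j<n. \<alpha> j)) * (\<Prod>j<n. \<Prod>i<j. sig (\<alpha> i - \<alpha> j))
           / (sig x * (\<Prod>i<n. sig (\<alpha> i) ^ n)) * exp (x * (\<Sum>j<n. zt (\<alpha> j)))"

definition kk :: "complex \<Rightarrow> complex \<Rightarrow> complex" where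
  "kk a b = sig (a - b) * exp (a * zt b) / (sig a * sig b)"

lemma LHS_step:
  assumes \<alpha>: "\<And>j. j < Suc n \<Longrightarrow> \<alpha> j \<notin> lattice w1 w2"
      and x: "x \<notin> lattice w1 w2" "x - \<alpha> 0 \<notin> lattice w1 w2"
  shows "Phi w1 w2 x (\<alpha> 0) * (\<Prod>j<n. kk (\<alpha> 0) (\<alpha> (Suc j))) * LHS n (\<lambda>j. \<alpha> (Suc j)) (x - \<alpha> 0) = LHS (Suc n) \<alpha> x"
proof -
  define a0 where "a0 = \<alpha> 0"
  define Sig where "Sig = (\<Sum>j<n. \<alpha> (Suc j))"
  define Z where "Z = (\<Sum>j<n. zt (\<alpha> (Suc j)))"
  define Pv where "Pv = (\<Prod>j<n. \<Prod>i<j. sig (\<alpha> (Suc i) - \<alpha> (Suc j)))"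
  define Pd where "Pd = (\<Prod>i<n. sig (\<alpha> (Suc i)) ^ n)"
  define Pk where "Pk = (\<Prod>j<n. sig (a0 - \<alpha> (Suc j)))"
  define Pb where "Pb = (\<Prod>j<n. sig (\<alpha> (Suc j)))"
  have nz: "sig (\<alpha> j) \<noteq> 0" if "j < Suc n" for j using \<alpha>[OF that] by (simp add: sig_eq_0_iff)
  have s0: "sig a0 \<noteq> 0" using nz[of 0] by (simp add: a0_def)
  have Sx: "sig x \<noteq> 0" and S1: "sig (x - a0) \<noteq> 0" using x by (simp_all add: sig_eq_0_iff a0_def)
  have Pb0: "Pb \<noteq> 0" unfolding Pb_def using nz by (auto simp: prod_zero_iff)
  have Pd0: "Pd \<noteq> 0" unfolding Pd_def using nz by (auto simp: prod_zero_iff)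
  have prodk: "(\<Prod>j<n. kk a0 (\<alpha> (Suc j))) = Pk * exp (a0 * Z) / (sig a0 ^ n * Pb)"
    by (simp add: kk_def Pk_def Pb_def Z_def a0_def prod_dividef prod.distrib exp_sum sum_distrib_left)
  have lhsn: "LHS n (\<lambda>j. \<alpha> (Suc j)) (x - a0) = sig (x - a0 - Sig) * Pv / (sig (x - a0) * Pd) * exp ((x - a0) * Z)"
    by (simp add: LHS_def Sig_def Pv_def Pd_def Z_def)
  have sum1: "(\<Sum>j<Suc n. \<alpha> j) = a0 + Sig" unfolding sum.lessThan_Suc_shift a0_def Sig_def ..
  have sum2: "(\<Sum>j<Suc n. zt (\<alpha> j)) = zt a0 + Z" unfolding sum.lessThan_Suc_shift a0_def Z_def ..
  have prod1: "(\<Prod>j<Suc n. \<Prod>i<j. sig (\<alpha> i - \<alpha> j)) = Pk * Pv"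
  proof -
    have "(\<Prod>j<Suc n. \<Prod>i<j. sig (\<alpha> i - \<alpha> j)) = (\<Prod>j<n. \<Prod>i<Suc j. sig (\<alpha> i - \<alpha> (Suc j)))"
      by (subst prod.lessThan_Suc_shift) simp
    also have "\<dots> = (\<Prod>j<n. sig (a0 - \<alpha> (Suc j)) * (\<Prod>i<j. sig (\<alpha> (Suc i) - \<alpha> (Suc j))))"
      by (intro prod.cong refl) (subst prod.lessThan_Suc_shift, simp add: a0_def)
    also have "\<dots> = Pk * Pv" by (simp add: prod.distrib Pk_def Pv_def)
    finally show ?thesis .
  qed
  have prod2: "(\<Prod>i<Suc n. sig (\<alpha> i) ^ Suc n) = sig a0 ^ Suc n * (Pb * Pd)"
  proof -
    have "(\<Prod>i<Suc n. sig (\<alpha> i) ^ Suc n) = sig a0 ^ Suc n * (\<Prod>i<n. sig (\<alpha> (Suc i)) ^ Suc n)"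
      by (subst prod.lessThan_Suc_shift) (simp add: a0_def)
    also have "(\<Prod>i<n. sig (\<alpha> (Suc i)) ^ Suc n) = Pb * Pd"
      by (simp add: Pb_def Pd_def prod.distrib)
    finally show ?thesis .
  qed
  have ex: "exp (x * (zt a0 + Z)) = exp (x * zt a0) * exp (a0 * Z) * exp ((x - a0) * Z)"
    by (simp add: exp_add[symmetric] algebra_simps)
  have lhs1: "LHS (Suc n) \<alpha> x = sig (x - a0 - Sig) * (Pk * Pv) / (sig x * (sig a0 ^ Suc n * (Pb * Pd))) * (exp (x * zt a0) * exp (a0 * Z) * exp ((x - a0) * Z))"
    unfolding LHS_def sum1 sum2 prod1 prod2 ex by (simp add: algebra_simps)
  have "Phi w1 w2 x a0 * (\<Prod>j<n. kk a0 (\<alpha> (Suc j))) * LHS n (\<lambda>j. \<alpha> (Suc j)) (x - a0) = LHS (Suc n) \<alpha> x"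
    unfolding prodk lhsn lhs1 Phi_def
    using s0 Sx S1 Pb0 Pd0 by (simp add: field_simps power_Suc)
  thus ?thesis by (simp add: a0_def)
qed

end

lemma eq_at_cont:
  fixes f g :: "complex \<Rightarrow> complex"
  assumes "isCont f x" "isCont g x" "eventually (\<lambda>y. f y = g y) (at x)"
  shows "f x = g x"
proof -
  have "f \<midarrow>x\<rightarrow> f x" using assms(1) by (simp add: isCont_def)
  moreover have "f \<midarrow>x\<rightarrow> g x"
    using assms(2) unfolding isCont_def
    by (rule Lim_transform_eventually) (use assms(3) in \<open>auto elim: eventually_mono\<close>)
  ultimately show ?thesis using tendsto_unique[OF at_neq_bot] by blast
qed

lemma Wr_expand:
  "Wr n f y = (\<Sum>p\<in>{p. p permutes {0..<n}}. signof p * (\<Prod>i=0..<n. (deriv ^^ i) (f (p i)) y))"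
proof -
  have "Wr n f y = (\<Sum>p\<in>{p. p permutes {0..<n}}. signof p * (\<Prod>i=0..<n. Matrix.mat n n (\<lambda>(i,j). (deriv ^^ i) (f j) y) $$ (i, p i)))"
    unfolding Wr_def by (rule det_def'[OF mat_carrier])
  also have "\<dots> = (\<Sum>p\<in>{p. p permutes {0..<n}}. signof p * (\<Prod>i=0..<n. (deriv ^^ i) (f (p i)) y))"
    by (intro sum.cong refl arg_cong2[where f = "(*)"] prod.cong) (auto simp: permutes_in_image)
  finally show ?thesis .
qed

context lat
begin

lemma sig_cont_at [continuous_intros]:
  "continuous (at x within s) f \<Longrightarrow> continuous (at x within s) (\<lambda>x. sig (f x))"
  by (rule continuous_within_compose3[OF sig_isCont])

lemma Ph_holo: "a \<notin> lattice w1 w2 \<Longrightarrow> (\<lambda>y. Phi w1 w2 y a) holomorphic_on (- lattice w1 w2)"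
  unfolding Phi_def by (intro holomorphic_intros) (auto simp: sig_eq_0_iff)

lemma Wr_isCont:
  assumes "\<And>j. j < n \<Longrightarrow> \<alpha> j \<notin> lattice w1 w2" "x \<notin> lattice w1 w2"
  shows "isCont (Wr n (\<lambda>j y. Phi w1 w2 y (\<alpha> j))) x"
proof -
  have c: "isCont ((deriv ^^ i) (\<lambda>y. Phi w1 w2 y (\<alpha> j))) x" if "j < n" for i j
  proof -
    have "(deriv ^^ i) (\<lambda>y. Phi w1 w2 y (\<alpha> j)) holomorphic_on (- lattice w1 w2)"
      by (intro holomorphic_higher_deriv Ph_holo assms that open_nonlat)
    thus ?thesis using assms(2) open_nonlat
      by (meson ComplI holomorphic_on_imp_continuous_on continuous_on_eq_continuous_at)
  qed
  have c': "isCont ((deriv ^^ i) (\<lambda>y. Phi w1 w2 y (\<alpha> (p i)))) x"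
    if "p \<in> {p. p permutes {0..<n}}" "i \<in> {0..<n}" for p i
    by (rule c) (use that in \<open>auto simp: permutes_in_image\<close>)
  have "isCont (\<lambda>y. \<Sum>p\<in>{p. p permutes {0..<n}}. signof p * (\<Prod>i=0..<n. (deriv ^^ i) (\<lambda>y. Phi w1 w2 y (\<alpha> (p i))) y)) x"
    by (rule continuous_sum, rule continuous_mult[OF continuous_const], rule continuous_prod, rule c')
  thus ?thesis unfolding Wr_expand by simp
qed

lemma LHS_isCont: "(\<And>j. j < n \<Longrightarrow> \<alpha> j \<notin> lattice w1 w2) \<Longrightarrow> x \<notin> lattice w1 w2 \<Longrightarrow> isCont (LHS n \<alpha>) x"
  unfolding LHS_def[abs_def]
  by (intro continuous_intros) (auto simp: sig_eq_0_iff prod_zero_iff)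

lemma main_step:
  assumes IH: "\<And>\<alpha> x. (\<And>j. j < n \<Longrightarrow> \<alpha> j \<notin> lattice w1 w2) \<Longrightarrow> x \<notin> lattice w1 w2 \<Longrightarrow>
                 Wr n (\<lambda>j y. Phi w1 w2 y (\<alpha> j)) x = LHS n \<alpha> x"
      and \<alpha>: "\<And>j. j < Suc n \<Longrightarrow> \<alpha> j \<notin> lattice w1 w2"
      and x: "x \<notin> lattice w1 w2" "x - \<alpha> 0 \<notin> lattice w1 w2"
  shows "Wr (Suc n) (\<lambda>j y. Phi w1 w2 y (\<alpha> j)) x = LHS (Suc n) \<alpha> x"
proof -
  define a0 where "a0 = \<alpha> 0"
  have a0: "a0 \<notin> lattice w1 w2" using \<alpha>[of 0] by (simp add: a0_def)
  define V where "V = - lattice w1 w2 \<inter> {y. y - a0 \<notin> lattice w1 w2}"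
  have Vo: "open V"
  proof -
    have "open ((\<lambda>y. y - a0) -` (- lattice w1 w2))"
      by (rule continuous_open_vimage[OF open_nonlat]) (intro continuous_intros)
    thus ?thesis unfolding V_def using open_nonlat by (simp add: vimage_def Collect_neg_eq open_Int)
  qed
  have xV: "x \<in> V" using x by (simp add: V_def a0_def)
  define P0 where "P0 = (\<lambda>y. Phi w1 w2 y a0)"
  have P0nz: "P0 y \<noteq> 0" if "y \<in> V" for y
    using that a0 by (auto simp: P0_def Phi_def V_def sig_eq_0_iff)
  have hol: "(\<lambda>y. Phi w1 w2 y (\<alpha> j)) holomorphic_on V" if "j < Suc n" for j
    by (rule holomorphic_on_subset[OF Ph_holo[OF \<alpha>[OF that]]]) (auto simp: V_def)
  have P0hol: "P0 holomorphic_on V" unfolding P0_def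
    by (rule holomorphic_on_subset[OF Ph_holo[OF a0]]) (auto simp: V_def)
  define r where "r = (\<lambda>j y. Phi w1 w2 y (\<alpha> j) / P0 y)"
  have rhol: "r j holomorphic_on V" if "j < Suc n" for j
    unfolding r_def by (intro holomorphic_on_divide hol that P0hol P0nz)
  define k where "k = (\<lambda>j. kk a0 (\<alpha> (Suc j)))"
  define \<Psi> where "\<Psi> = (\<lambda>j y. Phi w1 w2 (y - a0) (\<alpha> (Suc j)))"
  have \<Psi>hol: "\<Psi> j holomorphic_on V" if "j < n" for j
  proof -
    have "(\<lambda>y. Phi w1 w2 y (\<alpha> (Suc j))) \<circ> (\<lambda>y. y - a0) holomorphic_on V"
      by (rule holomorphic_on_compose_gen[OF _ Ph_holo[OF \<alpha>]]) (use that in \<open>auto simp: V_def intro!: holomorphic_intros\<close>)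
    thus ?thesis by (simp add: \<Psi>_def o_def)
  qed
  have invhol: "(\<lambda>y. 1 / P0 y) holomorphic_on V"
    by (intro holomorphic_on_divide holomorphic_intros P0hol P0nz)
  have "Wr (Suc n) (\<lambda>j y. Phi w1 w2 y (\<alpha> j)) x = Wr (Suc n) (\<lambda>j y. r j y * P0 y) x"
    by (rule Wr_cong[OF Vo xV]) (simp add: r_def P0nz)
  also have "\<dots> = P0 x ^ Suc n * Wr (Suc n) r x"
    by (rule Wr_mult[OF Vo xV rhol P0hol])
  also have "Wr (Suc n) r x = Wr n (\<lambda>j. deriv (r (Suc j))) x"
    by (rule Wr_first[OF Vo xV]) (use P0nz in \<open>auto simp: r_def P0_def a0_def\<close>)
  also have "\<dots> = Wr n (\<lambda>j y. (k j * \<Psi> j y) * (1 / P0 y)) x"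
  proof (rule Wr_cong[OF Vo xV])
    fix j y assume j: "j < n" and y: "y \<in> V"
    have "((\<lambda>y. Phi w1 w2 y (\<alpha> (Suc j)) / Phi w1 w2 y a0) has_field_derivative
           (sig (a0 - \<alpha> (Suc j)) * exp (a0 * zt (\<alpha> (Suc j))) / (sig a0 * sig (\<alpha> (Suc j)))) * Phi w1 w2 (y - a0) (\<alpha> (Suc j)) * (1 / Phi w1 w2 y a0)) (at y)"
      by (rule r_deriv[OF a0 \<alpha>]) (use j y in \<open>auto simp: V_def\<close>)
    hence "deriv (r (Suc j)) y = (sig (a0 - \<alpha> (Suc j)) * exp (a0 * zt (\<alpha> (Suc j))) / (sig a0 * sig (\<alpha> (Suc j)))) * Phi w1 w2 (y - a0) (\<alpha> (Suc j)) * (1 / Phi w1 w2 y a0)"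
      unfolding r_def P0_def by (rule DERIV_imp_deriv)
    thus "deriv (r (Suc j)) y = k j * \<Psi> j y * (1 / P0 y)"
      by (simp add: k_def kk_def \<Psi>_def P0_def)
  qed
  also have "\<dots> = (1 / P0 x) ^ n * Wr n (\<lambda>j y. k j * \<Psi> j y) x"
    by (rule Wr_mult[OF Vo xV _ invhol]) (intro holomorphic_intros \<Psi>hol)
  also have "Wr n (\<lambda>j y. k j * \<Psi> j y) x = (\<Prod>j<n. k j) * Wr n \<Psi> x"
    by (rule Wr_scale[OF Vo xV \<Psi>hol])
  also have "Wr n \<Psi> x = Wr n (\<lambda>j y. Phi w1 w2 y (\<alpha> (Suc j))) (x - a0)"
    unfolding \<Psi>_def
    by (rule Wr_shift[of n "\<lambda>j y. Phi w1 w2 y (\<alpha> (Suc j))" "- lattice w1 w2"])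
       (use \<alpha> x open_nonlat in \<open>auto intro: Ph_holo simp: a0_def\<close>)
  also have "\<dots> = LHS n (\<lambda>j. \<alpha> (Suc j)) (x - a0)"
    by (rule IH) (use \<alpha> x in \<open>auto simp: a0_def\<close>)
  finally have "Wr (Suc n) (\<lambda>j y. Phi w1 w2 y (\<alpha> j)) x =
      P0 x ^ Suc n * ((1 / P0 x) ^ n * ((\<Prod>j<n. k j) * LHS n (\<lambda>j. \<alpha> (Suc j)) (x - a0)))" .
  also have "\<dots> = P0 x * (\<Prod>j<n. k j) * LHS n (\<lambda>j. \<alpha> (Suc j)) (x - a0)"
    using P0nz[OF xV] by (simp add: power_one_over field_simps)
  also have "\<dots> = LHS (Suc n) \<alpha> x"
    unfolding P0_def k_def a0_def by (rule LHS_step[where n = n and \<alpha> = \<alpha> and x = x, OF \<alpha> x])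
  finally show ?thesis .
qed

lemma main:
  "(\<And>j. j < n \<Longrightarrow> \<alpha> j \<notin> lattice w1 w2) \<Longrightarrow> x \<notin> lattice w1 w2 \<Longrightarrow>
     Wr n (\<lambda>j y. Phi w1 w2 y (\<alpha> j)) x = LHS n \<alpha> x"
proof (induction n arbitrary: \<alpha> x)
  case 0
  have "sig x \<noteq> 0" using 0 by (simp add: sig_eq_0_iff)
  thus ?case by (simp add: Wr_def LHS_def)
next
  case (Suc n)
  show ?case
  proof (cases "x - \<alpha> 0 \<in> lattice w1 w2")
    case False
    show ?thesis by (rule main_step[where n = n and \<alpha> = \<alpha> and x = x, OF Suc.IH]) (use Suc.prems False in auto)
  next
    case True
    show ?thesis
    proof (rule eq_at_cont[OF Wr_isCont LHS_isCont])
      show "eventually (\<lambda>y. Wr (Suc n) (\<lambda>j y. Phi w1 w2 y (\<alpha> j)) y = LHS (Suc n) \<alpha> y) (at x)"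
        using eventually_conj[OF ev_nonlat[of x] ev_shift_nonlat[of "\<alpha> 0" x]]
      proof eventually_elim
        case (elim y)
        show ?case by (rule main_step[where n = n and \<alpha> = \<alpha> and x = y, OF Suc.IH]) (use elim Suc.prems in auto)
      qed
    qed (use Suc.prems in auto)
  qed
qed

end

theorem theorem9:
  fixes w1 w2 x :: complex and \<alpha> :: "nat \<Rightarrow> complex" and n :: nat
  assumes "Im (w2 / w1) > 0"
    and "n \<ge> 1"
    and "x \<notin> lattice w1 w2"
    and "\<And>j. j < n \<Longrightarrow> \<alpha> j \<notin> lattice w1 w2"
  shows "wsigma w1 w2 (x - (\<Sum>j<n. \<alpha> j)) * (\<Prod>j<n. \<Prod>i<j. wsigma w1 w2 (\<alpha> i - \<alpha> j))
           / (wsigma w1 w2 x * (\<Prod>i<n. wsigma w1 w2 (\<alpha> i) ^ n))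
           * exp (x * (\<Sum>j<n. wzeta w1 w2 (\<alpha> j)))
         = Determinant.det (Matrix.mat n n (\<lambda>(i, j). ((deriv ^^ i) (\<lambda>y. Phi w1 w2 y (\<alpha> j))) x))"
proof -
  interpret lat w1 w2 by unfold_locales (rule assms(1))
  have "Wr n (\<lambda>j y. Phi w1 w2 y (\<alpha> j)) x = LHS n \<alpha> x"
    by (rule main) (use assms in auto)
  thus ?thesis by (simp add: Wr_def LHS_def)
qed

end
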